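(* Let $G=(V,E,w)$ be a strongly connected graph on $n$ nodes with symmetric weights ($(i,j)\in E\iff(j,i)\in E$ and $w(i,j)=w(j,i)$), and let $S\subseteq V$. Then $$\operatorname{fp}'(G^S,0)=\frac1n\sum_{i,j\in V}\pi_i\, b^{(2)}_{ij}\,\psi_{ij},$$ where $\pi_i=\operatorname{fp}(G^S,0,\{i\})$ is the fixation probability from $\{i\}$ in the unbiased process ($\delta=0$), $b^{(2)}_{ij}=\sum_{l\in V}\lambda_l\,p_{il}\,p_{lj}$, and $(\psi_{ij})_{i,j\in V}$ is the solution of the linear system $$\psi_{ii}=0\ \ (i\in V),\qquad \psi_{ij}=\frac{1+\sum_{l\in V}\left(p_{il}\psi_{lj}+p_{jl}\psi_{il}\right)}{2}\ \ (i\neq j).$$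
   Context: Positional Voter model. A graph $G=(V,E,w)$ has node set $V$ with $|V|=n$, edge set $E\subseteq V\times V$ and weights $w\colon E\to\mathbb{R}_{>0}$; $\operatorname{in}(u)=\{v\in V:(v,u)\in E\}$. A configuration is a set $X\subseteq V$ (the nodes carrying the novel trait $A$). Given a biased set $S\subseteq V$ and bias $\delta\ge 0$, define $f^S_X(v\mid u)=1+\delta$ if $v\in X$ and $u\in S$, and $1$ otherwise. The process $(\mathcal{X}_t)_{t\ge0}$: given $\mathcal{X}_t=X$, a node $u$ is chosen uniformly at random from $V$, then $v\in\operatorname{in}(u)$ is chosen with probability $\frac{f^S_X(v\mid u)\,w(v,u)}{\sum_{x\in\operatorname{in}(u)} f^S_X(x\mid u)\,w(x,u)}$, and $\mathcal{X}_{t+1}=X\cup\{u\}$ if $v\in X$, $\mathcal{X}_{t+1}=X\setminus\{u\}$ otherwise. Define $\operatorname{fp}(G^S,\delta,X)=\mathbb{P}[\exists t\ge0:\mathcal{X}_t=V\mid\mathcal{X}_0=X]$ and $\operatorname{fp}(G^S,\delta)=\frac1n\sum_{u\in V}\operatorname{fp}(G^S,\delta,\{u\})$. Let $\operatorname{fp}'(G^S,0)=\frac{d}{d\delta}\big|_{\delta=0}\operatorname{fp}(G^S,\delta)$ (one-sided derivative at $0$). Write $w(i,j)=0$ if $(i,j)\notin E$, $p_{ij}=\frac{w(i,j)}{\sum_{l\in V}w(i,l)}$ (one-step random-walk transition probability), and $\lambda_i=1$ if $i\in S$, $\lambda_i=0$ otherwise. *)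

theory Defs
  imports "HOL-Analysis.Analysis"
begin

definition wt :: "('a \<times> 'a) set \<Rightarrow> ('a \<Rightarrow> 'a \<Rightarrow> real) \<Rightarrow> 'a \<Rightarrow> 'a \<Rightarrow> real" where
  "wt E w i j = (if (i, j) \<in> E then w i j else 0)"

definition in_nbrs :: "'a set \<Rightarrow> ('a \<times> 'a) set \<Rightarrow> 'a \<Rightarrow> 'a set" where
  "in_nbrs V E u = {v \<in> V. (v, u) \<in> E}"

definition fbias :: "'a set \<Rightarrow> real \<Rightarrow> 'a set \<Rightarrow> 'a \<Rightarrow> 'a \<Rightarrow> real" where
  "fbias S d X v u = (if v \<in> X \<and> u \<in> S then 1 + d else 1)"

text \<open>Probability that, having chosen node u, the node v is chosen to be copied.\<close>
definition choose_prob ::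
  "'a set \<Rightarrow> ('a \<times> 'a) set \<Rightarrow> ('a \<Rightarrow> 'a \<Rightarrow> real) \<Rightarrow> 'a set \<Rightarrow> real \<Rightarrow> 'a set \<Rightarrow> 'a \<Rightarrow> 'a \<Rightarrow> real" where
  "choose_prob V E w S d X u v =
     fbias S d X v u * w v u / (\<Sum>x\<in>in_nbrs V E u. fbias S d X x u * w x u)"

definition update :: "'a set \<Rightarrow> 'a \<Rightarrow> 'a \<Rightarrow> 'a set" where
  "update X u v = (if v \<in> X then insert u X else X - {u})"

text \<open>hit_within V E w S d T X = P[\<exists>t \<le> T. X_t = V | X_0 = X],
  defined by first-step decomposition of the Positional Voter chain.\<close>
fun hit_within ::
  "'a set \<Rightarrow> ('a \<times> 'a) set \<Rightarrow> ('a \<Rightarrow> 'a \<Rightarrow> real) \<Rightarrow> 'a set \<Rightarrow> real \<Rightarrow> nat \<Rightarrow> 'a set \<Rightarrow> real" where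
  "hit_within V E w S d 0 X = (if X = V then 1 else 0)"
| "hit_within V E w S d (Suc T) X =
     (if X = V then 1 else
      (\<Sum>u\<in>V. (1 / real (card V)) *
         (\<Sum>v\<in>in_nbrs V E u. choose_prob V E w S d X u v *
             hit_within V E w S d T (update X u v))))"

definition fp :: "'a set \<Rightarrow> ('a \<times> 'a) set \<Rightarrow> ('a \<Rightarrow> 'a \<Rightarrow> real) \<Rightarrow> 'a set \<Rightarrow> real \<Rightarrow> 'a set \<Rightarrow> real" where
  "fp V E w S d X = lim (\<lambda>T. hit_within V E w S d T X)"

definition fp_avg :: "'a set \<Rightarrow> ('a \<times> 'a) set \<Rightarrow> ('a \<Rightarrow> 'a \<Rightarrow> real) \<Rightarrow> 'a set \<Rightarrow> real \<Rightarrow> real" where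
  "fp_avg V E w S d = (1 / real (card V)) * (\<Sum>u\<in>V. fp V E w S d {u})"

definition ptrans :: "'a set \<Rightarrow> ('a \<times> 'a) set \<Rightarrow> ('a \<Rightarrow> 'a \<Rightarrow> real) \<Rightarrow> 'a \<Rightarrow> 'a \<Rightarrow> real" where
  "ptrans V E w i j = wt E w i j / (\<Sum>l\<in>V. wt E w i l)"

definition lam :: "'a set \<Rightarrow> 'a \<Rightarrow> real" where
  "lam S i = (if i \<in> S then 1 else 0)"

definition b2 :: "'a set \<Rightarrow> ('a \<times> 'a) set \<Rightarrow> ('a \<Rightarrow> 'a \<Rightarrow> real) \<Rightarrow> 'a set \<Rightarrow> 'a \<Rightarrow> 'a \<Rightarrow> real" where
  "b2 V E w S i j = (\<Sum>l\<in>V. lam S l * ptrans V E w i l * ptrans V E w l j)"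

definition psi_system :: "'a set \<Rightarrow> ('a \<times> 'a) set \<Rightarrow> ('a \<Rightarrow> 'a \<Rightarrow> real) \<Rightarrow> ('a \<Rightarrow> 'a \<Rightarrow> real) \<Rightarrow> bool" where
  "psi_system V E w \<psi> \<longleftrightarrow>
     (\<forall>i\<in>V. \<psi> i i = 0) \<and>
     (\<forall>i\<in>V. \<forall>j\<in>V. i \<noteq> j \<longrightarrow>
        \<psi> i j = (1 + (\<Sum>l\<in>V. ptrans V E w i l * \<psi> l j + ptrans V E w j l * \<psi> i l)) / 2)"

end

theory Submission
  imports Defs "Jordan_Normal_Form.Determinant"
begin



lemma lin_inverse:
  fixes I :: "'s set" and A :: "'s \<Rightarrow> 's \<Rightarrow> real"
  assumes finI: "finite I"
    and inj: "\<And>f. (\<forall>i\<in>I. (\<Sum>j\<in>I. A i j * f j) = 0) \<Longrightarrow> (\<forall>i\<in>I. f i = 0)"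
  shows "\<exists>B. (\<forall>i\<in>I. \<forall>k\<in>I. (\<Sum>j\<in>I. A i j * B j k) = (if i = k then 1 else 0))
           \<and> (\<forall>i\<in>I. \<forall>k\<in>I. (\<Sum>j\<in>I. B i j * A j k) = (if i = k then 1 else 0))"
proof -
  obtain xs where xs: "set xs = I" "distinct xs" using finite_distinct_list[OF finI] by blast
  define m where "m = length xs"
  define ix where "ix = the_inv_into {..<m} ((!) xs)"
  have injx: "inj_on ((!) xs) {..<m}" using xs(2) unfolding m_def by (simp add: inj_on_nth)
  have imgx: "(!) xs ` {..<m} = I" using xs(1) unfolding m_def
    by (auto simp: set_conv_nth)
  have sumI: "\<And>g. (\<Sum>j\<in>I. g j) = (\<Sum>b<m. g (xs ! b))"
    using sum.reindex[OF injx] imgx by (metis comp_apply sum.cong)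
  have ix1: "\<And>b. b < m \<Longrightarrow> ix (xs ! b) = b" unfolding ix_def using injx
    by (simp add: the_inv_into_f_f)
  have ix2: "\<And>i. i \<in> I \<Longrightarrow> ix i < m \<and> xs ! (ix i) = i"
    using imgx ix1 by auto
  define M where "M = mat m m (\<lambda>(a,b). A (xs ! a) (xs ! b))"
  have Mc: "M \<in> carrier_mat m m" unfolding M_def by simp
  have "Determinant.det M \<noteq> 0"
  proof
    assume "Determinant.det M = 0"
    then obtain v where v: "v \<in> carrier_vec m" "v \<noteq> 0\<^sub>v m" "M *\<^sub>v v = 0\<^sub>v m"
      using det_0_iff_vec_prod_zero_field[OF Mc] by blast
    define f where "f j = v $ (ix j)" for j
    have "\<forall>i\<in>I. (\<Sum>j\<in>I. A i j * f j) = 0"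
    proof
      fix i assume i: "i \<in> I"
      have "(\<Sum>j\<in>I. A i j * f j) = (\<Sum>b<m. A (xs ! ix i) (xs ! b) * v $ b)"
        unfolding sumI f_def using ix1 ix2[OF i] by simp
      also have "\<dots> = (M *\<^sub>v v) $ (ix i)"
        using ix2[OF i] v(1) unfolding M_def
        by (simp add: mult_mat_vec_def scalar_prod_def atLeast0LessThan)
      also have "\<dots> = 0" using v(3) ix2[OF i] by simp
      finally show "(\<Sum>j\<in>I. A i j * f j) = 0" .
    qed
    from inj[OF this] have "\<forall>b<m. v $ b = 0"
      using ix1 imgx unfolding f_def by force
    then have "v = 0\<^sub>v m" using v(1) by (intro eq_vecI) auto
    with v(2) show False by simp
  qed
  from det_non_zero_imp_unit[OF Mc this, of "()"]
  have "\<exists>B. B \<in> carrier_mat m m \<and> B * M = 1\<^sub>m m \<and> M * B = 1\<^sub>m m"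
    unfolding Units_def by (simp add: ring_mat_simps) blast
  then obtain B where B: "B \<in> carrier_mat m m" "B * M = 1\<^sub>m m" "M * B = 1\<^sub>m m"
    by blast
  define Bf where "Bf i j = B $$ (ix i, ix j)" for i j
  have key: "(\<Sum>j\<in>I. A i j * Bf j k) = (M * B) $$ (ix i, ix k) \<and> (\<Sum>j\<in>I. Bf i j * A j k) = (B * M) $$ (ix i, ix k)"
    if i: "i \<in> I" and k: "k \<in> I" for i k
  proof -
    have Mi: "\<And>a b. a < m \<Longrightarrow> b < m \<Longrightarrow> M $$ (a, b) = A (xs ! a) (xs ! b)"
      unfolding M_def by simp
    have 1: "(\<Sum>j\<in>I. A i j * Bf j k) = (\<Sum>b<m. M $$ (ix i, b) * B $$ (b, ix k))"
      unfolding sumI Bf_def by (rule sum.cong) (use ix1 ix2[OF i] Mi in auto)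
    have 2: "(\<Sum>j\<in>I. Bf i j * A j k) = (\<Sum>b<m. B $$ (ix i, b) * M $$ (b, ix k))"
      unfolding sumI Bf_def by (rule sum.cong) (use ix1 ix2[OF k] Mi in auto)
    have 3: "(M * B) $$ (ix i, ix k) = (\<Sum>b<m. M $$ (ix i, b) * B $$ (b, ix k))"
      using ix2[OF i] ix2[OF k] B(1) Mc
      by (simp add: index_mult_mat scalar_prod_def atLeast0LessThan)
    have 4: "(B * M) $$ (ix i, ix k) = (\<Sum>b<m. B $$ (ix i, b) * M $$ (b, ix k))"
      using ix2[OF i] ix2[OF k] B(1) Mc
      by (simp add: index_mult_mat scalar_prod_def atLeast0LessThan)
    show ?thesis using 1 2 3 4 by simp
  qed
  have idx: "(1\<^sub>m m :: real mat) $$ (ix i, ix k) = (if i = k then 1 else 0)" if "i \<in> I" "k \<in> I" for i k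
    using ix2[OF that(1)] ix2[OF that(2)] by (metis index_one_mat(1))
  show ?thesis
    by (intro exI[of _ Bf] conjI ballI) (simp_all add: key idx B(2,3))
qed




locale pv =
  fixes V :: "'a set" and E :: "('a \<times> 'a) set" and w :: "'a \<Rightarrow> 'a \<Rightarrow> real" and S :: "'a set"
  assumes finV: "finite V"
    and E_sub: "E \<subseteq> V \<times> V"
    and w_pos: "\<forall>i j. (i, j) \<in> E \<longrightarrow> w i j > 0"
    and strong: "\<forall>i\<in>V. \<forall>j\<in>V. (i, j) \<in> E\<^sup>*"
    and E_sym: "\<forall>i j. (i, j) \<in> E \<longleftrightarrow> (j, i) \<in> E"
    and w_sym: "\<forall>i j. (i, j) \<in> E \<longrightarrow> w i j = w j i"
    and S_sub: "S \<subseteq> V"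
    and two: "card V \<ge> 2"
begin

definition "n = real (card V)"
definition "dg u = (\<Sum>l\<in>V. wt E w u l)"
abbreviation "p \<equiv> ptrans V E w"
definition "Dt = (\<Sum>u\<in>V. dg u)"
definition "st u = dg u / Dt"
definition "aa X u = (\<Sum>v\<in>X. p u v)"
definition "al (d::real) X u = (1 + d * lam S u) * aa X u / (1 + d * lam S u * aa X u)"
definition "Pop d f X = (1 / n) * (\<Sum>u\<in>V. al d X u * f (insert u X) + (1 - al d X u) * f (X - {u}))"

lemma n_pos: "n > 0" using two unfolding n_def by simp
lemma n_ge1: "n \<ge> 1" using two unfolding n_def by simp

lemma wt_nonneg: "wt E w i j \<ge> 0"
  unfolding wt_def using w_pos by (auto simp: less_imp_le)

lemma wt_sym: "wt E w i j = wt E w j i"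
  unfolding wt_def using E_sym w_sym by auto

lemma wt_pos: "(i, j) \<in> E \<Longrightarrow> wt E w i j > 0"
  unfolding wt_def using w_pos by auto

lemma has_nbr: assumes "u \<in> V" shows "\<exists>l\<in>V. (u, l) \<in> E"
proof -
  obtain j where j: "j \<in> V" "j \<noteq> u"
  proof -
    have "\<not> V \<subseteq> {u}"
    proof
      assume "V \<subseteq> {u}"
      then have "card V \<le> card {u}" by (intro card_mono) auto
      with two show False by simp
    qed
    thus ?thesis using that by blast
  qed
  have "(u, j) \<in> E\<^sup>*" using strong assms j by blast
  then obtain l where "(u, l) \<in> E" using j(2) by (metis converse_rtranclE)
  thus ?thesis using E_sub by auto
qed

lemma dg_pos: "u \<in> V \<Longrightarrow> dg u > 0"
proof -
  assume u: "u \<in> V"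
  obtain l where l: "l \<in> V" "(u, l) \<in> E" using has_nbr[OF u] by blast
  have "wt E w u l \<le> dg u" unfolding dg_def
    by (rule member_le_sum) (use l finV wt_nonneg in auto)
  with wt_pos[OF l(2)] show ?thesis by simp
qed

lemma Dt_pos: "Dt > 0"
proof -
  have "V \<noteq> {}" using two by auto
  then show ?thesis unfolding Dt_def using dg_pos finV by (intro sum_pos) auto
qed

lemma p_def': "p u v = wt E w u v / dg u" unfolding ptrans_def dg_def by simp

lemma dg_nonneg: "dg u \<ge> 0" unfolding dg_def using wt_nonneg by (simp add: sum_nonneg)

lemma p_nonneg: "p u v \<ge> 0"
  unfolding p_def' using wt_nonneg dg_nonneg by simp

lemma p_sum: "u \<in> V \<Longrightarrow> (\<Sum>v\<in>V. p u v) = 1"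
proof -
  assume u: "u \<in> V"
  have "(\<Sum>v\<in>V. wt E w u v / dg u) = dg u / dg u"
    by (simp add: sum_divide_distrib[symmetric] dg_def)
  thus ?thesis using dg_pos[OF u] unfolding p_def' by simp
qed

lemma p_pos: "(u, v) \<in> E \<Longrightarrow> p u v > 0"
  using wt_pos[of u v] dg_pos[of u] E_sub unfolding p_def' by auto

lemma rev: "st u * p u v = st v * p v u" if "u \<in> V" "v \<in> V"
  using dg_pos[OF that(1)] dg_pos[OF that(2)] wt_sym[of u v] unfolding st_def p_def' by simp

lemma st_sum: "(\<Sum>u\<in>V. st u) = 1"
  unfolding st_def using Dt_pos by (simp add: sum_divide_distrib[symmetric] Dt_def)

lemma st_nonneg: "st u \<ge> 0" unfolding st_def dg_def Dt_def using wt_nonneg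
  by (simp add: sum_nonneg)

lemma stat: "v \<in> V \<Longrightarrow> (\<Sum>u\<in>V. st u * p u v) = st v"
proof -
  assume v: "v \<in> V"
  have "(\<Sum>u\<in>V. st u * p u v) = (\<Sum>u\<in>V. st v * p v u)" by (rule sum.cong) (use rev v in auto)
  also have "\<dots> = st v" using p_sum[OF v] by (simp add: sum_distrib_left[symmetric])
  finally show ?thesis .
qed

lemma aa_bounds: "X \<subseteq> V \<Longrightarrow> 0 \<le> aa X u \<and> aa X u \<le> 1" if "u \<in> V"
proof -
  assume X: "X \<subseteq> V"
  have "aa X u \<le> (\<Sum>v\<in>V. p u v)" unfolding aa_def
    by (rule sum_mono2) (use finV X p_nonneg in auto)
  thus ?thesis using p_sum[OF that] unfolding aa_def by (simp add: sum_nonneg p_nonneg)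
qed

lemma lam01: "lam S u = 0 \<or> lam S u = 1" unfolding lam_def by auto

lemma al_bounds: assumes "(d::real) \<ge> 0" "0 \<le> a" "a \<le> 1" "l = 0 \<or> l = 1"
  shows "0 \<le> (1 + d * l) * a / (1 + d * l * a) \<and> (1 + d * l) * a / (1 + d * l * a) \<le> 1"
proof -
  have "d * l * a \<ge> 0" using assms by auto
  then have pos: "1 + d * l * a > 0" by linarith
  have "(1 + d * l) * a \<le> 1 + d * l * a" using assms by (auto simp: algebra_simps)
  thus ?thesis using pos assms by (auto simp: divide_le_eq_1)
qed

lemma al01: "u \<in> V \<Longrightarrow> X \<subseteq> V \<Longrightarrow> d \<ge> 0 \<Longrightarrow> 0 \<le> al d X u \<and> al d X u \<le> 1"
  unfolding al_def using al_bounds aa_bounds lam01 by blast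

lemma al0: "al 0 X u = aa X u" unfolding al_def by simp

end


context pv begin

lemma in_sum: assumes "u \<in> V"
  shows "(\<Sum>x\<in>in_nbrs V E u. G x * w x u) = (\<Sum>x\<in>V. G x * wt E w u x)"
proof -
  have "(\<Sum>x\<in>in_nbrs V E u. G x * w x u) = (\<Sum>x\<in>V. if (x, u) \<in> E then G x * w x u else 0)"
    unfolding in_nbrs_def using finV by (simp add: sum.inter_filter)
  also have "\<dots> = (\<Sum>x\<in>V. G x * wt E w u x)"
    by (rule sum.cong) (use E_sym w_sym in \<open>auto simp: wt_def\<close>)
  finally show ?thesis .
qed

lemma wtX: "X \<subseteq> V \<Longrightarrow> u \<in> V \<Longrightarrow> (\<Sum>x\<in>X. wt E w u x) = dg u * aa X u"
  using dg_pos[of u] unfolding aa_def p_def' by (simp add: sum_divide_distrib[symmetric])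

lemma split_sum: "X \<subseteq> V \<Longrightarrow> (\<Sum>x\<in>V. g x) = (\<Sum>x\<in>X. g x) + (\<Sum>x\<in>V - X. g x)"
  using finV by (metis sum.subset_diff add.commute)

lemma cp_sum: assumes u: "u \<in> V" and X: "X \<subseteq> V" and d: "d \<ge> 0"
  shows "(\<Sum>v\<in>in_nbrs V E u. choose_prob V E w S d X u v * H (update X u v))
       = al d X u * H (insert u X) + (1 - al d X u) * H (X - {u})"
proof -
  define l where "l = lam S u"
  define a where "a = aa X u"
  define g where "g = dg u"
  have g: "g > 0" using dg_pos[OF u] g_def by simp
  have a01: "0 \<le> a" "a \<le> 1" using aa_bounds[OF u X] a_def by auto
  have l01: "l = 0 \<or> l = 1" using lam01 l_def by simp
  have pos: "1 + d * l * a > 0"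
  proof -
    have "d * l * a \<ge> 0" using a01 d l01 by auto
    thus ?thesis by linarith
  qed
  have fb: "fbias S d X x u = 1 + d * l * (if x \<in> X then 1 else 0)" for x
    unfolding fbias_def l_def lam_def by auto
  have sX: "(\<Sum>x\<in>X. wt E w u x) = g * a" using wtX[OF X u] g_def a_def by simp
  have sV: "(\<Sum>x\<in>V. wt E w u x) = g" using g_def dg_def by simp
  have sVX: "(\<Sum>x\<in>V - X. wt E w u x) = g - g * a" using split_sum[OF X, of "wt E w u"] sX sV by simp
  define Z where "Z = (\<Sum>x\<in>in_nbrs V E u. fbias S d X x u * w x u)"
  have "Z = (\<Sum>x\<in>V. fbias S d X x u * wt E w u x)" unfolding Z_def by (rule in_sum[OF u])
  also have "\<dots> = (\<Sum>x\<in>X. fbias S d X x u * wt E w u x) + (\<Sum>x\<in>V - X. fbias S d X x u * wt E w u x)"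
    by (rule split_sum[OF X])
  also have "\<dots> = (1 + d * l) * (\<Sum>x\<in>X. wt E w u x) + (\<Sum>x\<in>V - X. wt E w u x)"
    by (simp add: fb sum_distrib_left)
  finally have Z: "Z = g * (1 + d * l * a)" using sX sVX by (simp add: algebra_simps)
  have "(\<Sum>v\<in>in_nbrs V E u. choose_prob V E w S d X u v * H (update X u v))
      = (\<Sum>v\<in>in_nbrs V E u. (fbias S d X v u * H (update X u v) / Z) * w v u)"
    unfolding choose_prob_def Z_def by (rule sum.cong) auto
  also have "\<dots> = (\<Sum>x\<in>V. (fbias S d X x u * H (update X u x) / Z) * wt E w u x)"
    by (rule in_sum[OF u])
  also have "\<dots> = (\<Sum>x\<in>X. (fbias S d X x u * H (update X u x) / Z) * wt E w u x)
     + (\<Sum>x\<in>V - X. (fbias S d X x u * H (update X u x) / Z) * wt E w u x)"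
    by (rule split_sum[OF X])
  also have "\<dots> = ((1 + d * l) * H (insert u X) / Z) * (\<Sum>x\<in>X. wt E w u x)
     + (H (X - {u}) / Z) * (\<Sum>x\<in>V - X. wt E w u x)"
    by (simp add: fb sum_distrib_left update_def)
  also have "\<dots> = al d X u * H (insert u X) + (1 - al d X u) * H (X - {u})"
  proof -
    define q where "q = 1 + d * l * a"
    have q: "q \<noteq> 0" using pos q_def by simp
    have g0: "g \<noteq> 0" using g by simp
    have al: "al d X u = (1 + d * l) * a / q" unfolding al_def q_def l_def a_def by simp
    have 1: "1 - (1 + d * l) * a / q = (1 - a) / q" using q unfolding q_def by (simp add: field_simps)
    show ?thesis unfolding sX sVX Z q_def[symmetric] al 1 using q g0
      by (simp add: field_simps)
  qed
  finally show ?thesis .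
qed

lemma HW: assumes X: "X \<subseteq> V" and d: "d \<ge> 0"
  shows "hit_within V E w S d (Suc T) X = (if X = V then 1 else Pop d (hit_within V E w S d T) X)"
proof -
  have "(\<Sum>u\<in>V. 1 / real (card V) * (\<Sum>v\<in>in_nbrs V E u. choose_prob V E w S d X u v *
             hit_within V E w S d T (update X u v)))
    = (\<Sum>u\<in>V. 1 / n * (al d X u * hit_within V E w S d T (insert u X) + (1 - al d X u) * hit_within V E w S d T (X - {u})))"
    by (rule sum.cong) (use cp_sum[OF _ X d] in \<open>auto simp: n_def\<close>)
  thus ?thesis unfolding Pop_def by (simp add: sum_distrib_left)
qed

end


declare hit_within.simps[simp del]
lemmas hw0 = hit_within.simps(1)
context pv begin

abbreviation "hw d T X \<equiv> hit_within V E w S d T X"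
abbreviation "fpp d X \<equiv> fp V E w S d X"

lemma Vne: "V \<noteq> {}" using two by auto

lemma sum_V_const: "(1 / n) * (\<Sum>u\<in>V. c) = c"
proof -
  have "card V \<noteq> 0" using two by simp
  thus ?thesis by (simp add: n_def)
qed

lemma Pop_const: "Pop d (\<lambda>_. c) X = c"
proof -
  have "(\<Sum>u\<in>V. al d X u * c + (1 - al d X u) * c) = (\<Sum>u\<in>V. c)"
    by (rule sum.cong) (auto simp: algebra_simps)
  thus ?thesis unfolding Pop_def using sum_V_const by simp
qed

lemma Pop_mono: assumes X: "X \<subseteq> V" and d: "d \<ge> 0" and fg: "\<And>Y. Y \<subseteq> V \<Longrightarrow> f Y \<le> g Y"
  shows "Pop d f X \<le> Pop d g X"
proof -
  have "(\<Sum>u\<in>V. al d X u * f (insert u X) + (1 - al d X u) * f (X - {u}))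
     \<le> (\<Sum>u\<in>V. al d X u * g (insert u X) + (1 - al d X u) * g (X - {u}))"
  proof (rule sum_mono)
    fix u assume u: "u \<in> V"
    have a: "0 \<le> al d X u" "al d X u \<le> 1" using al01[OF u X d] by auto
    have "insert u X \<subseteq> V" "X - {u} \<subseteq> V" using X u by auto
    hence "f (insert u X) \<le> g (insert u X)" "f (X - {u}) \<le> g (X - {u})" using fg by auto
    thus "al d X u * f (insert u X) + (1 - al d X u) * f (X - {u})
       \<le> al d X u * g (insert u X) + (1 - al d X u) * g (X - {u})"
      using a by (intro add_mono mult_left_mono) auto
  qed
  thus ?thesis unfolding Pop_def using n_pos by (simp add: divide_right_mono)
qed

lemma hw_bounds: "X \<subseteq> V \<Longrightarrow> d \<ge> 0 \<Longrightarrow> 0 \<le> hw d T X \<and> hw d T X \<le> 1"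
proof (induction T arbitrary: X)
  case 0 thus ?case by (simp add: hw0)
next
  case (Suc T)
  have "Pop d (\<lambda>_. 0) X \<le> Pop d (hw d T) X" "Pop d (hw d T) X \<le> Pop d (\<lambda>_. 1) X"
    using Suc by (auto intro!: Pop_mono)
  thus ?case using HW[OF Suc.prems] by (simp add: Pop_const)
qed

lemma hw_mono: "X \<subseteq> V \<Longrightarrow> d \<ge> 0 \<Longrightarrow> hw d T X \<le> hw d (Suc T) X"
proof (induction T arbitrary: X)
  case 0
  have "Pop d (\<lambda>_. 0) X \<le> Pop d (hw d 0) X" using 0 by (intro Pop_mono) (auto simp: hw0)
  hence "0 \<le> Pop d (hw d 0) X" by (simp add: Pop_const)
  hence p: "0 \<le> Pop d (hw d 0) X" .
  show ?case
  proof (cases "X = V")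
    case True thus ?thesis using HW[OF 0, of 0] by (simp add: hw0)
  next
    case False
    have "hw d 0 X = 0" using False by (simp add: hw0)
    moreover have "hw d (Suc 0) X = Pop d (hw d 0) X" using HW[OF 0, of 0] False by simp
    ultimately show ?thesis using p by linarith
  qed
next
  case (Suc T)
  have "Pop d (hw d T) X \<le> Pop d (hw d (Suc T)) X" using Suc by (intro Pop_mono) auto
  thus ?case using HW[OF Suc.prems] HW[OF Suc.prems, of "Suc T"] by auto
qed

lemma hw_conv: assumes "X \<subseteq> V" "d \<ge> 0" shows "(\<lambda>T. hw d T X) \<longlonglongrightarrow> fpp d X"
proof -
  have inc: "incseq (\<lambda>T. hw d T X)" using hw_mono[OF assms] by (intro incseq_SucI) auto
  have bdd: "bdd_above (range (\<lambda>T. hw d T X))" using hw_bounds[OF assms]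
    by (intro bdd_aboveI[of _ 1]) auto
  from LIMSEQ_incseq_SUP[OF bdd inc] have "convergent (\<lambda>T. hw d T X)" by (auto simp: convergent_def)
  thus ?thesis unfolding fp_def by (simp add: convergent_LIMSEQ_iff)
qed

lemma fp_V: "d \<ge> 0 \<Longrightarrow> fpp d V = 1"
proof -
  assume d: "d \<ge> 0"
  have "(\<lambda>T. hw d T V) \<longlonglongrightarrow> 1"
  proof -
    have "hw d T V = 1" for T by (cases T) (auto simp: HW[OF _ d] hw0)
    thus ?thesis by simp
  qed
  thus ?thesis using hw_conv[OF _ d, of V] LIMSEQ_unique by blast
qed

lemma al_empty: "al d {} u = 0" unfolding al_def aa_def by simp

lemma fp_empty: "d \<ge> 0 \<Longrightarrow> fpp d {} = 0"
proof -
  assume d: "d \<ge> 0"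
  have "hw d T {} = 0" for T
  proof (induction T)
    case 0 thus ?case using Vne by (simp add: hw0)
  next
    case (Suc T)
    have "Pop d (hw d T) {} = 0" unfolding Pop_def al_empty using Suc by simp
    thus ?case using HW[OF _ d, of "{}"] Vne by simp
  qed
  hence "(\<lambda>T. hw d T {}) \<longlonglongrightarrow> 0" by simp
  thus ?thesis using hw_conv[OF _ d, of "{}"] LIMSEQ_unique by blast
qed

lemma fp_eq: assumes X: "X \<subseteq> V" "X \<noteq> V" and d: "d \<ge> 0"
  shows "fpp d X = Pop d (fpp d) X"
proof -
  have 1: "(\<lambda>T. hw d (Suc T) X) \<longlonglongrightarrow> fpp d X" using hw_conv[OF X(1) d] by (rule LIMSEQ_Suc)
  have "(\<lambda>T. Pop d (hw d T) X) \<longlonglongrightarrow> Pop d (fpp d) X"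
    unfolding Pop_def
    by (intro tendsto_intros hw_conv) (use X d in auto)
  moreover have "hw d (Suc T) X = Pop d (hw d T) X" for T using HW[OF X(1) d] X(2) by simp
  ultimately show ?thesis using 1 LIMSEQ_unique by simp
qed

end



lemma maxp:
  fixes St :: "'s set" and Bd :: "'s set" and K :: "'k set" and \<mu> :: "'s \<Rightarrow> nat"
    and c :: "'s \<Rightarrow> 'k \<Rightarrow> real" and f :: "'s \<Rightarrow> real"
  assumes finSt: "finite St" and finK: "finite K"
    and cnn: "\<And>X k. X \<in> St \<Longrightarrow> X \<notin> Bd \<Longrightarrow> k \<in> K \<Longrightarrow> c X k \<ge> 0 \<and> nx X k \<in> St"
    and csum: "\<And>X. X \<in> St \<Longrightarrow> X \<notin> Bd \<Longrightarrow> (\<Sum>k\<in>K. c X k) = 1"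
    and reach: "\<And>X. X \<in> St \<Longrightarrow> X \<notin> Bd \<Longrightarrow> \<exists>k\<in>K. c X k > 0 \<and> (nx X k \<in> Bd \<or> \<mu> (nx X k) < \<mu> X)"
    and sub: "\<And>X. X \<in> St \<Longrightarrow> X \<notin> Bd \<Longrightarrow> f X \<le> (\<Sum>k\<in>K. c X k * f (nx X k))"
    and bd: "\<And>X. X \<in> St \<Longrightarrow> X \<in> Bd \<Longrightarrow> f X \<le> 0"
    and X: "X \<in> St"
  shows "f X \<le> 0"
proof (rule ccontr)
  assume "\<not> f X \<le> 0"
  hence fX: "f X > 0" by simp
  define Mx where "Mx = Max (f ` St)"
  have ge: "\<And>Y. Y \<in> St \<Longrightarrow> f Y \<le> Mx" unfolding Mx_def using finSt by auto
  have Mpos: "Mx > 0" using ge[OF X] fX by simp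
  have main: "\<forall>Y\<in>St. \<mu> Y = m \<longrightarrow> f Y \<noteq> Mx" for m
  proof (induction m rule: less_induct)
    case (less m)
    show ?case
    proof (intro ballI impI notI)
      fix Y assume Y: "Y \<in> St" "\<mu> Y = m" "f Y = Mx"
      have nB: "Y \<notin> Bd" using bd[OF Y(1)] Y(3) Mpos by force
      have "(\<Sum>k\<in>K. c Y k * (Mx - f (nx Y k))) = Mx * (\<Sum>k\<in>K. c Y k) - (\<Sum>k\<in>K. c Y k * f (nx Y k))"
        by (simp add: algebra_simps sum_subtractf sum_distrib_left)
      also have "\<dots> \<le> 0" using csum[OF Y(1) nB] sub[OF Y(1) nB] Y(3) by simp
      finally have s0: "(\<Sum>k\<in>K. c Y k * (Mx - f (nx Y k))) \<le> 0" .
      have nn: "\<forall>k\<in>K. c Y k * (Mx - f (nx Y k)) \<ge> 0"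
        using cnn[OF Y(1) nB] ge by (auto intro!: mult_nonneg_nonneg)
      have z: "\<forall>k\<in>K. c Y k * (Mx - f (nx Y k)) = 0"
        using sum_nonneg_eq_0_iff[OF finK] nn s0 by (metis (no_types, lifting) antisym sum_nonneg)
      obtain k where k: "k \<in> K" "c Y k > 0" "nx Y k \<in> Bd \<or> \<mu> (nx Y k) < \<mu> Y"
        using reach[OF Y(1) nB] by blast
      have fk: "f (nx Y k) = Mx" using z k by auto
      have inS: "nx Y k \<in> St" using cnn[OF Y(1) nB k(1)] by simp
      show False
      proof (cases "nx Y k \<in> Bd")
        case True thus False using bd[OF inS] fk Mpos by simp
      next
        case False
        hence "\<mu> (nx Y k) < m" using k Y by simp
        thus False using less inS fk by blast
      qed
    qed
  qed
  have "Mx \<in> f ` St" unfolding Mx_def using finSt X by (intro Max_in) auto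
  then obtain Y where "Y \<in> St" "f Y = Mx" by auto
  thus False using main by blast
qed

lemma cross_edge: assumes "(x, y) \<in> E\<^sup>*" "x \<in> X" "y \<notin> X"
  shows "\<exists>v u. (v, u) \<in> E \<and> v \<in> X \<and> u \<notin> X"
  using assms by (induction rule: rtrancl_induct) auto

context pv begin

lemma Pop_sumform: "Pop d f X = (\<Sum>k\<in>V \<times> UNIV. (if snd k then al d X (fst k) else 1 - al d X (fst k)) / n
     * f (if snd k then insert (fst k) X else X - {fst k}))"
proof -
  have "(\<Sum>k\<in>V \<times> UNIV. (if snd k then al d X (fst k) else 1 - al d X (fst k)) / n
     * f (if snd k then insert (fst k) X else X - {fst k}))
    = (\<Sum>u\<in>V. \<Sum>b\<in>UNIV. (if b then al d X u else 1 - al d X u) / n * f (if b then insert u X else X - {u}))"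
    by (simp add: sum.cartesian_product split_beta)
  also have "\<dots> = (\<Sum>u\<in>V. (al d X u * f (insert u X) + (1 - al d X u) * f (X - {u})) / n)"
    by (simp add: UNIV_bool add_divide_distrib add.commute)
  also have "\<dots> = Pop d f X" unfolding Pop_def by (simp add: sum_divide_distrib)
  finally show ?thesis by simp
qed

definition "cc d X k = (if snd k then al d X (fst k) else 1 - al d X (fst k)) / n"
definition "nxc X k = (if snd k then insert (fst k) X else X - {fst k})"

lemma Pop_cc: "Pop d f X = (\<Sum>k\<in>V \<times> UNIV. cc d X k * f (nxc X k))"
  unfolding cc_def nxc_def by (rule Pop_sumform)

lemma config_le0:
  assumes d: "d \<ge> 0"
    and sub: "\<And>X. X \<subseteq> V \<Longrightarrow> X \<noteq> {} \<Longrightarrow> X \<noteq> V \<Longrightarrow> f X \<le> Pop d f X"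
    and b1: "f {} \<le> 0" and b2: "f V \<le> 0" and X: "X \<subseteq> V"
  shows "f X \<le> 0"
proof -
  have fin1: "finite (Pow V)" using finV by simp
  have fin2: "finite (V \<times> (UNIV :: bool set))" using finV by simp
  have X': "X \<in> Pow V" using X by simp
  have subs: "f Y \<le> (\<Sum>k\<in>V \<times> UNIV. cc d Y k * f (nxc Y k))" if "Y \<in> Pow V" "Y \<notin> {{}, V}" for Y
    using sub[of Y] that unfolding Pop_cc by auto
  have cnn: "0 \<le> cc d Y k \<and> nxc Y k \<in> Pow V" if "Y \<in> Pow V" "Y \<notin> {{}, V}" "k \<in> V \<times> (UNIV :: bool set)" for Y k
  proof -
    have "fst k \<in> V" using that by auto
    thus ?thesis using al01[of "fst k" Y d] that d n_pos unfolding cc_def nxc_def by auto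
  qed
  have csum: "(\<Sum>k\<in>V \<times> UNIV. cc d Y k) = 1" for Y
    using Pop_cc[of d "\<lambda>_. 1" Y] Pop_const[of d 1 Y] by simp
  have reach: "\<exists>k\<in>V \<times> UNIV. 0 < cc d Y k \<and> (nxc Y k \<in> {{}, V} \<or> card (V - nxc Y k) < card (V - Y))"
    if Y: "Y \<in> Pow V" "Y \<notin> {{}, V}" for Y
  proof -
    have Ysub: "Y \<subseteq> V" and Yne: "Y \<noteq> {}" and YV: "Y \<noteq> V" using Y by auto
    obtain x where x: "x \<in> Y" using Yne by blast
    obtain y where y: "y \<in> V" "y \<notin> Y" using Ysub YV by blast
    have xV: "x \<in> V" using x Ysub by blast
    have "(x, y) \<in> E\<^sup>*" using strong xV y(1) by blast
    then obtain v u where vu: "(v, u) \<in> E" "v \<in> Y" "u \<notin> Y" using cross_edge[of x y E Y] x y(2) by blast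
    have u: "u \<in> V" using vu E_sub by auto
    have "(u, v) \<in> E" using vu E_sym by auto
    hence ppos: "p u v > 0" by (rule p_pos)
    have finY: "finite Y" using Ysub finV by (rule finite_subset)
    have "p u v \<le> aa Y u" unfolding aa_def
      by (rule member_le_sum) (use vu finY p_nonneg in auto)
    hence apos: "aa Y u > 0" using ppos by simp
    have alpos: "al d Y u > 0"
    proof -
      have l: "lam S u = 0 \<or> lam S u = 1" by (rule lam01)
      have "d * lam S u * aa Y u \<ge> 0" using l d apos by auto
      hence q: "1 + d * lam S u * aa Y u > 0" by linarith
      have "1 + d * lam S u > 0" using l d by auto
      hence "(1 + d * lam S u) * aa Y u > 0" using apos by simp
      thus ?thesis unfolding al_def using q by simp
    qed
    have c1: "cc d Y (u, True) > 0" unfolding cc_def using alpos n_pos by simp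
    have c2: "card (V - nxc Y (u, True)) < card (V - Y)"
    proof -
      have "nxc Y (u, True) = insert u Y" unfolding nxc_def by simp
      moreover have "V - insert u Y \<subset> V - Y" using u vu(3) by blast
      ultimately show ?thesis using finV by (simp add: psubset_card_mono)
    qed
    have uk: "(u, True) \<in> V \<times> (UNIV :: bool set)" using u by simp
    show ?thesis using c1 c2 by (intro bexI[OF _ uk]) simp
  qed
  have bd: "f Y \<le> 0" if "Y \<in> Pow V" "Y \<in> {{}, V}" for Y
    using that b1 b2 by auto
  show ?thesis
    by (rule maxp[where c = "cc d" and nx = nxc and \<mu> = "\<lambda>X. card (V - X)", OF fin1 fin2 cnn csum reach subs bd X'])
qed

end


context pv begin

lemma sum_VB: "(\<Sum>k\<in>A \<times> B. G k) = (\<Sum>l\<in>A. \<Sum>b\<in>B. G (l, b))"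
  by (simp add: sum.cartesian_product)

lemma Pop_neg: "Pop d (\<lambda>X. - f X) Y = - Pop d f Y"
proof -
  have "(\<Sum>u\<in>V. al d Y u * - f (insert u Y) + (1 - al d Y u) * - f (Y - {u}))
     = (\<Sum>u\<in>V. - (al d Y u * f (insert u Y) + (1 - al d Y u) * f (Y - {u})))"
    by (rule sum.cong) (auto simp: algebra_simps)
  thus ?thesis unfolding Pop_def by (simp only: sum_negf)
qed

definition "pc q k = (if snd k then p (fst q) (fst k) else p (snd q) (fst k)) / 2"
definition "pnx q k = (if snd k then (fst k, snd q) else (fst q, fst k))"
definition "pmu q = (LEAST m. q \<in> E ^^ m)"

lemma sum_bool: "(\<Sum>b\<in>UNIV. h b) = h True + (h False :: real)"
  by (simp add: UNIV_bool)

lemma pc_simps: "pc (i, j) (l, True) = p i l / 2" "pc (i, j) (l, False) = p j l / 2"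
  "pnx (i, j) (l, True) = (l, j)" "pnx (i, j) (l, False) = (i, l)"
  unfolding pc_def pnx_def by simp_all

lemma pair_sumform: "(\<Sum>k\<in>V \<times> UNIV. pc (i, j) k * g (pnx (i, j) k))
   = (\<Sum>l\<in>V. p i l * g (l, j) + p j l * g (i, l)) / 2"
proof -
  have "(\<Sum>k\<in>V \<times> UNIV. pc (i, j) k * g (pnx (i, j) k))
    = (\<Sum>l\<in>V. \<Sum>b\<in>UNIV. pc (i, j) (l, b) * g (pnx (i, j) (l, b)))"
    by (rule sum_VB)
  also have "\<dots> = (\<Sum>l\<in>V. (p i l * g (l, j) + p j l * g (i, l)) / 2)"
    by (rule sum.cong) (simp_all only: sum_bool pc_simps add_divide_distrib times_divide_eq_left)
  finally show ?thesis by (simp only: sum_divide_distrib)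
qed

lemma pair_le0:
  assumes sub: "\<And>i j. i \<in> V \<Longrightarrow> j \<in> V \<Longrightarrow> i \<noteq> j \<Longrightarrow> f (i, j) \<le> (\<Sum>l\<in>V. p i l * f (l, j) + p j l * f (i, l)) / 2"
    and diag: "\<And>i. i \<in> V \<Longrightarrow> f (i, i) \<le> 0"
    and q: "q \<in> V \<times> V"
  shows "f q \<le> 0"
proof -
  have fin1: "finite (V \<times> V)" using finV by simp
  have fin2: "finite (V \<times> (UNIV :: bool set))" using finV by simp
  have subs: "f Y \<le> (\<Sum>k\<in>V \<times> UNIV. pc Y k * f (pnx Y k))" if "Y \<in> V \<times> V" "Y \<notin> {q. fst q = snd q}" for Y
  proof -
    obtain i j where Y: "Y = (i, j)" by (cases Y)
    have ij: "i \<in> V" "j \<in> V" "i \<noteq> j" using that unfolding Y by auto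
    show ?thesis unfolding Y pair_sumform by (rule sub[OF ij])
  qed
  have cnn: "0 \<le> pc Y k \<and> pnx Y k \<in> V \<times> V" if "Y \<in> V \<times> V" "Y \<notin> {q. fst q = snd q}" "k \<in> V \<times> (UNIV :: bool set)" for Y k
  proof -
    have "fst k \<in> V" "fst Y \<in> V" "snd Y \<in> V" using that by auto
    thus ?thesis using p_nonneg unfolding pc_def pnx_def by (simp add: mem_Times_iff)
  qed
  have csum: "(\<Sum>k\<in>V \<times> UNIV. pc Y k) = 1" if "Y \<in> V \<times> V" "Y \<notin> {q. fst q = snd q}" for Y
  proof -
    obtain i j where Y0: "Y = (i, j)" by (cases Y)
    have Y: "Y = (i, j)" "i \<in> V" "j \<in> V" using that Y0 by auto
    have "(\<Sum>k\<in>V \<times> UNIV. pc Y k) = (\<Sum>k\<in>V \<times> UNIV. pc (i, j) k * (\<lambda>_. 1) (pnx (i, j) k))"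
      using Y by simp
    also have "\<dots> = (\<Sum>l\<in>V. p i l + p j l) / 2" using pair_sumform[of i j "\<lambda>_. 1"] by simp
    also have "\<dots> = 1" using p_sum[OF Y(2)] p_sum[OF Y(3)] by (simp add: sum.distrib)
    finally show ?thesis .
  qed
  have reach: "\<exists>k\<in>V \<times> UNIV. 0 < pc Y k \<and> (pnx Y k \<in> {q. fst q = snd q} \<or> pmu (pnx Y k) < pmu Y)"
    if Y: "Y \<in> V \<times> V" "Y \<notin> {q. fst q = snd q}" for Y
  proof -
    obtain i j where Y0: "Y = (i, j)" by (cases Y)
    have ij: "Y = (i, j)" "i \<in> V" "j \<in> V" "i \<noteq> j" using Y Y0 by auto
    have "(i, j) \<in> E\<^sup>*" using strong ij by blast
    then have ex: "\<exists>m. (i, j) \<in> E ^^ m" by (simp add: rtrancl_power)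
    define m0 where "m0 = pmu (i, j)"
    have m0: "(i, j) \<in> E ^^ m0" unfolding m0_def pmu_def using ex by (rule LeastI_ex)
    have "m0 \<noteq> 0"
    proof
      assume "m0 = 0"
      hence "i = j" using m0 by simp
      thus False using ij(4) by simp
    qed
    then obtain m' where m': "m0 = Suc m'" using not0_implies_Suc by blast
    obtain l where l: "(i, l) \<in> E" "(l, j) \<in> E ^^ m'" using relpow_Suc_D2[OF m0[unfolded m']] by blast
    have lV: "l \<in> V" using l(1) E_sub by auto
    have "pmu (l, j) \<le> m'" unfolding pmu_def using l(2) by (rule Least_le)
    hence lt: "pmu (l, j) < pmu (i, j)" using m' m0_def by simp
    have c1: "pc (i, j) (l, True) > 0" unfolding pc_def using p_pos[OF l(1)] by simp
    have lk: "(l, True) \<in> V \<times> (UNIV :: bool set)" using lV by simp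
    have "pnx (i, j) (l, True) = (l, j)" unfolding pnx_def by simp
    hence "0 < pc Y (l, True) \<and> (pnx Y (l, True) \<in> {q. fst q = snd q} \<or> pmu (pnx Y (l, True)) < pmu Y)"
      using c1 lt ij(1) by simp
    thus ?thesis using lk by blast
  qed
  have bd: "f Y \<le> 0" if "Y \<in> V \<times> V" "Y \<in> {q. fst q = snd q}" for Y
  proof -
    obtain i j where Y0: "Y = (i, j)" by (cases Y)
    thus ?thesis using that diag by auto
  qed
  show ?thesis
    by (rule maxp[where c = pc and nx = pnx and \<mu> = pmu, OF fin1 fin2 cnn csum reach subs bd q])
qed

lemma pair_unique:
  assumes h: "\<And>i j. i \<in> V \<Longrightarrow> j \<in> V \<Longrightarrow> i \<noteq> j \<Longrightarrow> f (i, j) = (\<Sum>l\<in>V. p i l * f (l, j) + p j l * f (i, l)) / 2"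
    and diag: "\<And>i. i \<in> V \<Longrightarrow> f (i, i) = 0"
    and q: "q \<in> V \<times> V"
  shows "f q = 0"
proof -
  have "f q \<le> 0"
  proof (rule pair_le0[of f q])
    fix i j assume ij: "i \<in> V" "j \<in> V" "i \<noteq> j"
    show "f (i, j) \<le> (\<Sum>l\<in>V. p i l * f (l, j) + p j l * f (i, l)) / 2" using h[OF ij] by linarith
  qed (use diag q in auto)
  moreover have "- f q \<le> 0"
  proof (rule pair_le0[of "\<lambda>q. - f q" q])
    fix i j assume "i \<in> V" "j \<in> V" "i \<noteq> j"
    thus "- f (i, j) \<le> (\<Sum>l\<in>V. p i l * - f (l, j) + p j l * - f (i, l)) / 2"
    proof -
      have "(\<Sum>l\<in>V. p i l * - f (l, j) + p j l * - f (i, l)) = - (\<Sum>l\<in>V. p i l * f (l, j) + p j l * f (i, l))"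
        by (simp add: sum_negf[symmetric] algebra_simps)
      thus ?thesis using h[OF \<open>i \<in> V\<close> \<open>j \<in> V\<close> \<open>i \<noteq> j\<close>] by linarith
    qed
  qed (use diag q in auto)
  ultimately show ?thesis by simp
qed

lemma config_unique:
  assumes d: "d \<ge> 0"
    and h: "\<And>X. X \<subseteq> V \<Longrightarrow> X \<noteq> {} \<Longrightarrow> X \<noteq> V \<Longrightarrow> f X = Pop d f X"
    and b1: "f {} = 0" and b2: "f V = 0" and X: "X \<subseteq> V"
  shows "f X = 0"
proof -
  have "f X \<le> 0"
  proof (rule config_le0[OF d, of f X])
    fix Y assume Y: "Y \<subseteq> V" "Y \<noteq> {}" "Y \<noteq> V"
    show "f Y \<le> Pop d f Y" using h[OF Y] by linarith
  qed (use b1 b2 X in auto)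
  moreover have "- f X \<le> 0"
  proof (rule config_le0[OF d, of "\<lambda>X. - f X" X])
    fix Y assume "Y \<subseteq> V" "Y \<noteq> {}" "Y \<noteq> V"
    thus "- f Y \<le> Pop d (\<lambda>X. - f X) Y"
      using h[of Y] Pop_neg[of d f Y] by (simp del: Pop_def)
  qed (use b1 b2 X in auto)
  ultimately show ?thesis by simp
qed

end


context pv begin

definition "Mf X = (\<Sum>i\<in>X. st i)"

lemma Pop_diff: "Pop d (\<lambda>Y. f Y - g Y) X = Pop d f X - Pop d g X"
proof -
  have "(\<Sum>u\<in>V. al d X u * (f (insert u X) - g (insert u X)) + (1 - al d X u) * (f (X - {u}) - g (X - {u})))
    = (\<Sum>u\<in>V. al d X u * f (insert u X) + (1 - al d X u) * f (X - {u}))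
      - (\<Sum>u\<in>V. al d X u * g (insert u X) + (1 - al d X u) * g (X - {u}))"
    by (simp add: sum_subtractf[symmetric] algebra_simps)
  thus ?thesis unfolding Pop_def by (simp add: right_diff_distrib)
qed

lemma Pop0_M: assumes X: "X \<subseteq> V" shows "Pop 0 Mf X = Mf X"
proof -
  have finX: "finite X" using X finV by (rule finite_subset)
  have T: "aa X u * Mf (insert u X) + (1 - aa X u) * Mf (X - {u})
      = Mf X + st u * aa X u - (if u \<in> X then st u else 0)" for u
  proof -
    have 1: "Mf (insert u X) = Mf X + (if u \<in> X then 0 else st u)"
      unfolding Mf_def using finX by (simp add: insert_absorb)
    have 2: "Mf (X - {u}) = Mf X - (if u \<in> X then st u else 0)"
      unfolding Mf_def using finX by (simp add: sum_diff1)
    show ?thesis unfolding 1 2 by (auto simp: algebra_simps)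
  qed
  have s1: "(\<Sum>u\<in>V. st u * aa X u) = Mf X"
  proof -
    have "(\<Sum>u\<in>V. st u * aa X u) = (\<Sum>u\<in>V. \<Sum>v\<in>X. st u * p u v)"
      unfolding aa_def by (simp add: sum_distrib_left)
    also have "\<dots> = (\<Sum>v\<in>X. \<Sum>u\<in>V. st u * p u v)" by (rule sum.swap)
    also have "\<dots> = (\<Sum>v\<in>X. st v)" by (rule sum.cong) (use X stat in auto)
    finally show ?thesis unfolding Mf_def .
  qed
  have s2: "(\<Sum>u\<in>V. (if u \<in> X then st u else 0)) = Mf X"
    unfolding Mf_def using finV X by (simp add: sum.If_cases Int_absorb1)
  have "Pop 0 Mf X = (1 / n) * (\<Sum>u\<in>V. Mf X + st u * aa X u - (if u \<in> X then st u else 0))"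
    unfolding Pop_def al0 using T by simp
  also have "\<dots> = (1 / n) * (\<Sum>u\<in>V. Mf X)"
    by (simp add: sum.distrib sum_subtractf s1 s2)
  also have "\<dots> = Mf X" by (rule sum_V_const)
  finally show ?thesis .
qed

lemma Mf_V: "Mf V = 1" unfolding Mf_def by (rule st_sum)

lemma fp0: assumes X: "X \<subseteq> V" shows "fpp 0 X = Mf X"
proof -
  have "fpp 0 X - Mf X = 0"
  proof (rule config_unique[of 0 "\<lambda>X. fpp 0 X - Mf X"])
    fix Y assume Y: "Y \<subseteq> V" "Y \<noteq> {}" "Y \<noteq> V"
    show "fpp 0 Y - Mf Y = Pop 0 (\<lambda>X. fpp 0 X - Mf X) Y"
      unfolding Pop_diff using fp_eq[OF Y(1) Y(3)] Pop0_M[OF Y(1)] by simp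
  qed (use X fp_V fp_empty Mf_V in \<open>auto simp: Mf_def\<close>)
  thus ?thesis by simp
qed

end


context pv begin

definition "Am q r = (if r = q then 1 else 0) - (if fst q = snd q then 0 else
    ((if snd r = snd q then p (fst q) (fst r) else 0) + (if fst r = fst q then p (snd q) (snd r) else 0)) / 2)"

lemma Am_apply: assumes i: "i \<in> V" and j: "j \<in> V"
  shows "(\<Sum>r\<in>V \<times> V. Am (i, j) r * f r) =
    (if i = j then f (i, j) else f (i, j) - (\<Sum>l\<in>V. p i l * f (l, j) + p j l * f (i, l)) / 2)"
proof -
  have d: "(\<Sum>r\<in>V \<times> V. (if r = (i, j) then 1 else 0) * f r) = f (i, j)"
    using i j finV by (simp add: if_distrib[of "\<lambda>x. x * _"] sum.delta' cong: if_cong)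
  have e1: "(\<Sum>r\<in>V \<times> V. (if snd r = j then p i (fst r) else 0) * f r) = (\<Sum>l\<in>V. p i l * f (l, j))"
  proof -
    have "(\<Sum>r\<in>V \<times> V. (if snd r = j then p i (fst r) else 0) * f r)
      = (\<Sum>l\<in>V. \<Sum>k\<in>V. (if k = j then p i l * f (l, k) else 0))"
      unfolding sum_VB by (intro sum.cong) auto
    also have "\<dots> = (\<Sum>l\<in>V. p i l * f (l, j))" using j finV by (simp add: sum.delta')
    finally show ?thesis .
  qed
  have e2: "(\<Sum>r\<in>V \<times> V. (if fst r = i then p j (snd r) else 0) * f r) = (\<Sum>l\<in>V. p j l * f (i, l))"
  proof -
    have "(\<Sum>r\<in>V \<times> V. (if fst r = i then p j (snd r) else 0) * f r)
      = (\<Sum>k\<in>V. (if k = i then (\<Sum>l\<in>V. p j l * f (k, l)) else 0))"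
      unfolding sum_VB by (intro sum.cong) auto
    also have "\<dots> = (\<Sum>l\<in>V. p j l * f (i, l))" using i finV by (simp add: sum.delta')
    finally show ?thesis .
  qed
  show ?thesis
  proof (cases "i = j")
    case True
    have "(\<Sum>r\<in>V \<times> V. Am (i, j) r * f r) = (\<Sum>r\<in>V \<times> V. (if r = (i, j) then 1 else 0) * f r)"
      unfolding Am_def using True by (intro sum.cong) auto
    thus ?thesis using d True by simp
  next
    case False
    have "(\<Sum>r\<in>V \<times> V. Am (i, j) r * f r) = (\<Sum>r\<in>V \<times> V. (if r = (i, j) then 1 else 0) * f r)
       - ((\<Sum>r\<in>V \<times> V. (if snd r = j then p i (fst r) else 0) * f r)
          + (\<Sum>r\<in>V \<times> V. (if fst r = i then p j (snd r) else 0) * f r)) / 2"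
    proof -
      have "(\<Sum>r\<in>V \<times> V. Am (i, j) r * f r) = (\<Sum>r\<in>V \<times> V. (if r = (i, j) then 1 else 0) * f r
          - ((if snd r = j then p i (fst r) else 0) * f r + (if fst r = i then p j (snd r) else 0) * f r) / 2)"
        unfolding Am_def using False by (intro sum.cong refl) (simp add: algebra_simps add_divide_distrib)
      thus ?thesis by (simp only: sum_subtractf sum.distrib sum_divide_distrib[symmetric])
    qed
    thus ?thesis using d e1 e2 False by (simp add: sum.distrib)
  qed
qed

lemma Am_inj: assumes "\<forall>q\<in>V \<times> V. (\<Sum>r\<in>V \<times> V. Am q r * f r) = 0" shows "\<forall>q\<in>V \<times> V. f q = 0"
proof
  fix q assume q: "q \<in> V \<times> V"
  show "f q = 0"
  proof (rule pair_unique[OF _ _ q])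
    fix i j assume ij: "i \<in> V" "j \<in> V" "i \<noteq> j"
    show "f (i, j) = (\<Sum>l\<in>V. p i l * f (l, j) + p j l * f (i, l)) / 2"
      using assms Am_apply[OF ij(1,2), of f] ij by (simp add: sum.distrib)
  next
    fix i assume "i \<in> V"
    thus "f (i, i) = 0" using assms Am_apply[of i i f] by simp
  qed
qed

lemma Am_inv: "\<exists>B. (\<forall>i\<in>V \<times> V. \<forall>k\<in>V \<times> V. (\<Sum>j\<in>V \<times> V. Am i j * B j k) = (if i = k then 1 else 0))
           \<and> (\<forall>i\<in>V \<times> V. \<forall>k\<in>V \<times> V. (\<Sum>j\<in>V \<times> V. B i j * Am j k) = (if i = k then 1 else 0))"
  by (rule lin_inverse) (use finV Am_inj in auto)

definition "Cm X Y = (if Y = X then 1 else 0) - (if X = {} \<or> X = V then 0 else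
    (\<Sum>k\<in>V \<times> UNIV. cc 0 X k * (if nxc X k = Y then 1 else 0)))"

lemma Cm_apply: assumes X: "X \<subseteq> V"
  shows "(\<Sum>Y\<in>Pow V. Cm X Y * f Y) = (if X = {} \<or> X = V then f X else f X - Pop 0 f X)"
proof -
  have d: "(\<Sum>Y\<in>Pow V. (if Y = X then 1 else 0) * f Y) = f X"
    using X finV by (simp add: if_distrib[of "\<lambda>x. x * _"] sum.delta' cong: if_cong)
  have e: "(\<Sum>Y\<in>Pow V. (\<Sum>k\<in>V \<times> UNIV. cc 0 X k * (if nxc X k = Y then 1 else 0)) * f Y) = Pop 0 f X"
  proof -
    have "(\<Sum>Y\<in>Pow V. (\<Sum>k\<in>V \<times> UNIV. cc 0 X k * (if nxc X k = Y then 1 else 0)) * f Y)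
       = (\<Sum>Y\<in>Pow V. \<Sum>k\<in>V \<times> UNIV. (if nxc X k = Y then cc 0 X k else 0) * f Y)"
      unfolding sum_distrib_right by (intro sum.cong refl) simp
    also have "\<dots> = (\<Sum>k\<in>V \<times> UNIV. \<Sum>Y\<in>Pow V. (if nxc X k = Y then cc 0 X k else 0) * f Y)"
      by (rule sum.swap)
    also have "\<dots> = (\<Sum>k\<in>V \<times> UNIV. cc 0 X k * f (nxc X k))"
    proof (rule sum.cong)
      fix k assume k: "k \<in> V \<times> (UNIV :: bool set)"
      have "nxc X k \<in> Pow V" using X k unfolding nxc_def by auto
      moreover have "(\<Sum>Y\<in>Pow V. (if nxc X k = Y then cc 0 X k else 0) * f Y)
          = (\<Sum>Y\<in>Pow V. (if nxc X k = Y then cc 0 X k * f Y else 0))"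
        by (rule sum.cong) auto
      ultimately show "(\<Sum>Y\<in>Pow V. (if nxc X k = Y then cc 0 X k else 0) * f Y) = cc 0 X k * f (nxc X k)"
        using finV by (simp add: sum.delta)
    qed simp
    also have "\<dots> = Pop 0 f X" by (rule Pop_cc[symmetric])
    finally show ?thesis .
  qed
  show ?thesis
  proof (cases "X = {} \<or> X = V")
    case True
    have "(\<Sum>Y\<in>Pow V. Cm X Y * f Y) = (\<Sum>Y\<in>Pow V. (if Y = X then 1 else 0) * f Y)"
      unfolding Cm_def using True by (intro sum.cong) auto
    thus ?thesis using d True by simp
  next
    case False
    have "(\<Sum>Y\<in>Pow V. Cm X Y * f Y) = (\<Sum>Y\<in>Pow V. (if Y = X then 1 else 0) * f Y)
       - (\<Sum>Y\<in>Pow V. (\<Sum>k\<in>V \<times> UNIV. cc 0 X k * (if nxc X k = Y then 1 else 0)) * f Y)"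
      unfolding Cm_def using False by (simp add: sum_subtractf[symmetric] algebra_simps)
    thus ?thesis using d e False by simp
  qed
qed

lemma Cm_inv: "\<exists>B. (\<forall>i\<in>Pow V. \<forall>k\<in>Pow V. (\<Sum>j\<in>Pow V. Cm i j * B j k) = (if i = k then 1 else 0))
           \<and> (\<forall>i\<in>Pow V. \<forall>k\<in>Pow V. (\<Sum>j\<in>Pow V. B i j * Cm j k) = (if i = k then 1 else 0))"
proof (rule lin_inverse)
  show "finite (Pow V)" using finV by simp
  fix f assume h: "\<forall>i\<in>Pow V. (\<Sum>j\<in>Pow V. Cm i j * f j) = 0"
  have h': "(if X = {} \<or> X = V then f X else f X - Pop 0 f X) = 0" if "X \<subseteq> V" for X
    using h Cm_apply[OF that, of f] that by auto
  show "\<forall>i\<in>Pow V. f i = 0"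
  proof
    fix X assume "X \<in> Pow V"
    hence X: "X \<subseteq> V" by simp
    show "f X = 0"
    proof (rule config_unique[of 0 f X])
      fix Y assume Y: "Y \<subseteq> V" "Y \<noteq> {}" "Y \<noteq> V"
      show "f Y = Pop 0 f Y" using h'[OF Y(1)] Y by simp
    qed (use h'[of "{}"] h'[of V] X in auto)
  qed
qed

end


lemma sum_prod3: "(\<Sum>i\<in>A. \<Sum>j\<in>B. c * (a i * b j)) = (c::real) * ((\<Sum>i\<in>A. a i) * (\<Sum>j\<in>B. b j))"
  by (simp only: sum_product) (simp only: sum_distrib_left)

context pv begin

definition "eta r X = (if fst r \<in> X \<and> snd r \<notin> X then 1 else (0::real))"
definition "mm r = st (fst r) * b2 V E w S (fst r) (snd r)"

lemma lin2: "(\<Sum>q\<in>Q. c q * (a * x q + b * y q)) = a * (\<Sum>q\<in>Q. c q * x q) + b * (\<Sum>q\<in>Q. c q * (y q :: real))"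
  by (simp add: sum.distrib sum_distrib_left algebra_simps)

lemma Pop_lin: "Pop d (\<lambda>Y. \<Sum>q\<in>Q. c q * g q Y) X = (\<Sum>q\<in>Q. c q * Pop d (g q) X)"
proof -
  have "(\<Sum>u\<in>V. al d X u * (\<Sum>q\<in>Q. c q * g q (insert u X)) + (1 - al d X u) * (\<Sum>q\<in>Q. c q * g q (X - {u})))
      = (\<Sum>u\<in>V. \<Sum>q\<in>Q. c q * (al d X u * g q (insert u X) + (1 - al d X u) * g q (X - {u})))"
    by (intro sum.cong refl) (simp only: lin2)
  also have "\<dots> = (\<Sum>q\<in>Q. \<Sum>u\<in>V. c q * (al d X u * g q (insert u X) + (1 - al d X u) * g q (X - {u})))"
    by (rule sum.swap)
  finally show ?thesis unfolding Pop_def by (simp add: sum_distrib_left algebra_simps)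
qed

lemma aaX: "X \<subseteq> V \<Longrightarrow> (\<Sum>l\<in>V. p u l * (if l \<in> X then 1 else 0)) = aa X u"
proof -
  assume X: "X \<subseteq> V"
  have "(\<Sum>l\<in>V. p u l * (if l \<in> X then 1 else 0)) = (\<Sum>l\<in>V. if l \<in> X then p u l else 0)"
    by (rule sum.cong) auto
  also have "\<dots> = (\<Sum>l\<in>V \<inter> X. p u l)" using finV by (simp add: sum.inter_restrict)
  also have "V \<inter> X = X" using X by blast
  finally show ?thesis unfolding aa_def .
qed

lemma aaXc: "X \<subseteq> V \<Longrightarrow> u \<in> V \<Longrightarrow> (\<Sum>l\<in>V. p u l * (if l \<in> X then 0 else 1)) = 1 - aa X u"
proof -
  assume X: "X \<subseteq> V" and u: "u \<in> V"
  have "(\<Sum>l\<in>V. p u l * (if l \<in> X then 0 else 1)) + (\<Sum>l\<in>V. p u l * (if l \<in> X then 1 else 0))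
     = (\<Sum>l\<in>V. p u l)" unfolding sum.distrib[symmetric] by (rule sum.cong) auto
  thus ?thesis using aaX[OF X] p_sum[OF u] by simp
qed

lemma eta_step: assumes i: "i \<in> V" and j: "j \<in> V" and X: "X \<subseteq> V"
  shows "eta (i, j) X - Pop 0 (eta (i, j)) X = (2 / n) * (\<Sum>r\<in>V \<times> V. Am (i, j) r * eta r X)"
proof (cases "i = j")
  case True
  have z: "eta (i, j) = (\<lambda>_. 0)" using True unfolding eta_def by auto
  have 1: "Pop 0 (eta (i, j)) X = 0" unfolding z by (rule Pop_const)
  have 2: "eta (i, j) X = 0" unfolding z by simp
  have 3: "(\<Sum>r\<in>V \<times> V. Am (i, j) r * eta r X) = 0"
    using Am_apply[OF i j, of "\<lambda>r. eta r X"] 2 unfolding if_P[OF True] by simp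
  show ?thesis unfolding 1 2 3 by simp
next
  case False
  define e where "e = eta (i, j) X"
  define A1 where "A1 = (\<Sum>l\<in>V. p i l * eta (l, j) X)"
  define A2 where "A2 = (\<Sum>l\<in>V. p j l * eta (i, l) X)"
  have A1: "A1 = (if j \<in> X then 0 else aa X i)"
  proof -
    have "A1 = (\<Sum>l\<in>V. (if j \<in> X then 0 else 1) * (p i l * (if l \<in> X then 1 else 0)))"
      unfolding A1_def eta_def by (intro sum.cong refl) auto
    thus ?thesis using aaX[OF X, of i] by (simp add: sum_distrib_left[symmetric])
  qed
  have A2: "A2 = (if i \<in> X then 1 - aa X j else 0)"
  proof -
    have "A2 = (\<Sum>l\<in>V. (if i \<in> X then 1 else 0) * (p j l * (if l \<in> X then 0 else 1)))"
      unfolding A2_def eta_def by (intro sum.cong refl) auto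
    thus ?thesis using aaXc[OF X j] by (simp add: sum_distrib_left[symmetric])
  qed
  have T: "aa X u * eta (i, j) (insert u X) + (1 - aa X u) * eta (i, j) (X - {u})
     = e + (if u = i then A1 - e else 0) + (if u = j then A2 - e else 0)" for u
  proof -
    consider "u = i" | "u = j" | "u \<noteq> i" "u \<noteq> j" by blast
    thus ?thesis
    proof cases
      case 1 thus ?thesis using False unfolding e_def A1 eta_def by auto
    next
      case 2 thus ?thesis using False unfolding e_def A2 eta_def by auto
    next
      case 3 thus ?thesis unfolding e_def eta_def by auto
    qed
  qed
  have "Pop 0 (eta (i, j)) X = (1 / n) * (\<Sum>u\<in>V. e + (if u = i then A1 - e else 0) + (if u = j then A2 - e else 0))"
    unfolding Pop_def al0 using T by simp
  also have "\<dots> = (1 / n) * (\<Sum>u\<in>V. e) + (1 / n) * ((A1 - e) + (A2 - e))"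
    using i j finV by (simp add: sum.distrib algebra_simps add_divide_distrib)
  also have "\<dots> = e + (1 / n) * ((A1 - e) + (A2 - e))" by (simp only: sum_V_const)
  finally have P: "Pop 0 (eta (i, j)) X = e + (1 / n) * ((A1 - e) + (A2 - e))" .
  have R: "(\<Sum>r\<in>V \<times> V. Am (i, j) r * eta r X) = e - (A1 + A2) / 2"
    using Am_apply[OF i j, of "\<lambda>r. eta r X"] False unfolding e_def A1_def A2_def by (simp add: sum.distrib)
  show ?thesis unfolding P R e_def[symmetric] using n_pos by (simp add: field_simps)
qed

lemma Phi_eq:
  assumes K: "\<forall>t\<in>V \<times> V. (\<Sum>s\<in>V \<times> V. K s * Am s t) = mm t / 2" and X: "X \<subseteq> V"
  shows "(\<Sum>q\<in>V \<times> V. K q * eta q X) - Pop 0 (\<lambda>Y. \<Sum>q\<in>V \<times> V. K q * eta q Y) X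
       = (1 / n) * (\<Sum>r\<in>V \<times> V. mm r * eta r X)"
proof -
  have "(\<Sum>q\<in>V \<times> V. K q * eta q X) - Pop 0 (\<lambda>Y. \<Sum>q\<in>V \<times> V. K q * eta q Y) X
      = (\<Sum>q\<in>V \<times> V. K q * (eta q X - Pop 0 (eta q) X))"
    unfolding Pop_lin by (simp add: sum_subtractf[symmetric] algebra_simps)
  also have "\<dots> = (\<Sum>q\<in>V \<times> V. K q * ((2 / n) * (\<Sum>r\<in>V \<times> V. Am q r * eta r X)))"
    by (intro sum.cong refl) (use eta_step X in auto)
  also have "\<dots> = (2 / n) * (\<Sum>q\<in>V \<times> V. \<Sum>r\<in>V \<times> V. K q * Am q r * eta r X)"
    by (simp add: sum_distrib_left algebra_simps)
  also have "\<dots> = (2 / n) * (\<Sum>r\<in>V \<times> V. \<Sum>q\<in>V \<times> V. K q * Am q r * eta r X)"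
    by (rule arg_cong[where f = "\<lambda>x. (2 / n) * x"], rule sum.swap)
  also have "\<dots> = (2 / n) * (\<Sum>r\<in>V \<times> V. (mm r / 2) * eta r X)"
  proof (intro arg_cong[where f = "\<lambda>x. (2 / n) * x"] sum.cong refl)
    fix r assume r: "r \<in> V \<times> V"
    have "(\<Sum>q\<in>V \<times> V. K q * Am q r * eta r X) = (\<Sum>q\<in>V \<times> V. K q * Am q r) * eta r X"
      by (simp add: sum_distrib_right)
    thus "(\<Sum>q\<in>V \<times> V. K q * Am q r * eta r X) = mm r / 2 * eta r X" using K r by simp
  qed
  also have "\<dots> = (1 / n) * (\<Sum>r\<in>V \<times> V. mm r * eta r X)"
    by (simp add: sum_distrib_left)
  finally show ?thesis .
qed

lemma r_ident: assumes X: "X \<subseteq> V"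
  shows "(\<Sum>r\<in>V \<times> V. mm r * eta r X) = (\<Sum>u\<in>V. lam S u * st u * (aa X u * (1 - aa X u)))"
proof -
  define F where "F i j u = (lam S u * st u) * ((p u i * (if i \<in> X then 1 else 0)) * (p u j * (if j \<in> X then 0 else (1::real))))" for i j u
  have "(\<Sum>r\<in>V \<times> V. mm r * eta r X) = (\<Sum>i\<in>V. \<Sum>j\<in>V. mm (i, j) * eta (i, j) X)"
    by (rule sum_VB)
  also have "\<dots> = (\<Sum>i\<in>V. \<Sum>j\<in>V. \<Sum>u\<in>V. F i j u)"
  proof (intro sum.cong refl)
    fix i j assume i: "i \<in> V" and j: "j \<in> V"
    have "mm (i, j) * eta (i, j) X = (\<Sum>u\<in>V. lam S u * (st i * p i u) * p u j * eta (i, j) X)"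
      unfolding mm_def b2_def by (simp add: sum_distrib_left sum_distrib_right algebra_simps)
    also have "\<dots> = (\<Sum>u\<in>V. F i j u)"
    proof (intro sum.cong refl)
      fix u assume u: "u \<in> V"
      show "lam S u * (st i * p i u) * p u j * eta (i, j) X = F i j u"
        unfolding F_def eta_def rev[OF i u] by auto
    qed
    finally show "mm (i, j) * eta (i, j) X = (\<Sum>u\<in>V. F i j u)" .
  qed
  also have "\<dots> = (\<Sum>i\<in>V. \<Sum>u\<in>V. \<Sum>j\<in>V. F i j u)"
  proof (rule sum.cong[OF refl])
    fix i assume "i \<in> V"
    show "(\<Sum>j\<in>V. \<Sum>u\<in>V. F i j u) = (\<Sum>u\<in>V. \<Sum>j\<in>V. F i j u)" by (rule sum.swap)
  qed
  also have "\<dots> = (\<Sum>u\<in>V. \<Sum>i\<in>V. \<Sum>j\<in>V. F i j u)"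
    by (rule sum.swap[of "\<lambda>i u. \<Sum>j\<in>V. F i j u" V V])
  also have "\<dots> = (\<Sum>u\<in>V. (lam S u * st u) * ((\<Sum>i\<in>V. p u i * (if i \<in> X then 1 else 0)) * (\<Sum>j\<in>V. p u j * (if j \<in> X then 0 else 1))))"
    unfolding F_def by (rule sum.cong[OF refl]) (rule sum_prod3)
  also have "\<dots> = (\<Sum>u\<in>V. lam S u * st u * (aa X u * (1 - aa X u)))"
    by (intro sum.cong refl) (use aaX aaXc X in auto)
  finally show ?thesis .
qed

end



lemma div_le_self1: "(x::real) \<ge> 0 \<Longrightarrow> y \<ge> 1 \<Longrightarrow> x / y \<le> x"
proof -
  assume x: "x \<ge> 0" and y: "y \<ge> 1"
  have "x * 1 \<le> x * y" using mult_left_mono[OF y x] .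
  thus ?thesis using y by (simp add: divide_le_eq)
qed

lemma alpha_real:
  fixes t a :: real assumes t: "t \<ge> 0" and a: "0 \<le> a" "a \<le> 1"
  shows "\<bar>(1 + t) * a / (1 + t * a) - a\<bar> \<le> t"
    and "\<bar>(1 + t) * a / (1 + t * a) - a - t * (a * (1 - a))\<bar> \<le> t\<^sup>2"
proof -
  have ta: "t * a \<ge> 0" using t a by simp
  have q: "1 + t * a > 0" using ta by linarith
  have eq: "(1 + t) * a / (1 + t * a) - a = t * (a * (1 - a)) / (1 + t * a)"
    using q by (simp add: field_simps)
  have aa: "a * (1 - a) \<ge> 0" "a * (1 - a) \<le> 1" using a by (auto simp: mult_le_one)
  have "t * (a * (1 - a)) / (1 + t * a) \<le> t * (a * (1 - a))"
    using ta aa t by (intro div_le_self1) auto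
  moreover have "t * (a * (1 - a)) \<le> t" using aa t by (simp add: mult_left_le)
  moreover have "t * (a * (1 - a)) / (1 + t * a) \<ge> 0" using q aa t by simp
  ultimately show "\<bar>(1 + t) * a / (1 + t * a) - a\<bar> \<le> t" unfolding eq by (simp only: abs_of_nonneg)
  have eq2: "(1 + t) * a / (1 + t * a) - a - t * (a * (1 - a)) = - ((t * a) * (t * (a * (1 - a))) / (1 + t * a))"
    using q by (simp add: field_simps)
  have nn: "(t * a) * (t * (a * (1 - a))) / (1 + t * a) \<ge> 0"
    by (intro divide_nonneg_pos mult_nonneg_nonneg q) (use ta aa t a in auto)
  have "\<bar>- ((t * a) * (t * (a * (1 - a))) / (1 + t * a))\<bar> = (t * a) * (t * (a * (1 - a))) / (1 + t * a)"
    unfolding abs_minus_cancel using nn by (rule abs_of_nonneg)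
  also have "\<dots> \<le> (t * a) * (t * (a * (1 - a)))" using ta aa t
    by (intro div_le_self1) auto
  also have "\<dots> \<le> t * t"
    using ta aa t a by (intro mult_mono) (auto simp: mult_left_le mult_nonneg_nonneg)
  finally show "\<bar>(1 + t) * a / (1 + t * a) - a - t * (a * (1 - a))\<bar> \<le> t\<^sup>2"
    unfolding eq2 by (simp add: power2_eq_square)
qed

context pv begin

lemma Pop_dd: "Pop d f X - Pop 0 f X = (1 / n) * (\<Sum>u\<in>V. (al d X u - aa X u) * (f (insert u X) - f (X - {u})))"
proof -
  have "(\<Sum>u\<in>V. al d X u * f (insert u X) + (1 - al d X u) * f (X - {u}))
      - (\<Sum>u\<in>V. aa X u * f (insert u X) + (1 - aa X u) * f (X - {u}))
      = (\<Sum>u\<in>V. (al d X u - aa X u) * (f (insert u X) - f (X - {u})))"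
    by (simp add: sum_subtractf[symmetric] algebra_simps)
  thus ?thesis unfolding Pop_def al0 by (simp only: right_diff_distrib[symmetric])
qed

lemma Pop_scale: "Pop d (\<lambda>Y. c * f Y) X = c * Pop d f X"
proof -
  have "(\<Sum>u\<in>V. al d X u * (c * f (insert u X)) + (1 - al d X u) * (c * f (X - {u})))
      = c * (\<Sum>u\<in>V. al d X u * f (insert u X) + (1 - al d X u) * f (X - {u}))"
    by (simp add: sum_distrib_left algebra_simps)
  thus ?thesis unfolding Pop_def by simp
qed

lemma al_diff: assumes u: "u \<in> V" and X: "X \<subseteq> V" and d: "d \<ge> 0"
  shows "\<bar>al d X u - aa X u\<bar> \<le> d"
    and "\<bar>al d X u - aa X u - d * lam S u * (aa X u * (1 - aa X u))\<bar> \<le> d\<^sup>2"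
proof -
  have a: "0 \<le> aa X u" "aa X u \<le> 1" using aa_bounds[OF u X] by auto
  have l: "lam S u = 0 \<or> lam S u = 1" by (rule lam01)
  have t: "d * lam S u \<ge> 0" "d * lam S u \<le> d" using l d by auto
  have t2: "(d * lam S u)\<^sup>2 \<le> d\<^sup>2" using l d by auto
  have e: "al d X u = (1 + d * lam S u) * aa X u / (1 + d * lam S u * aa X u)" unfolding al_def by simp
  show "\<bar>al d X u - aa X u\<bar> \<le> d" using alpha_real(1)[OF t(1) a] t(2) e by simp
  show "\<bar>al d X u - aa X u - d * lam S u * (aa X u * (1 - aa X u))\<bar> \<le> d\<^sup>2"
    using alpha_real(2)[OF t(1) a] t2 e by simp
qed

lemma st_le1: "u \<in> V \<Longrightarrow> st u \<le> 1"
  using member_le_sum[of u V st] st_nonneg finV st_sum by auto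

end



lemma deriv_from_bound:
  fixes F :: "real \<Rightarrow> real"
  assumes C: "C \<ge> 0" and dlim: "dlim > 0"
    and b: "\<And>d. 0 < d \<Longrightarrow> d < dlim \<Longrightarrow> \<bar>(F d - F 0) / d - D\<bar> \<le> C * d"
  shows "(F has_real_derivative D) (at 0 within {0..})"
  unfolding has_field_derivative_iff
proof (unfold tendsto_iff, intro allI impI)
  fix e :: real assume e: "e > 0"
  define r where "r = min dlim (e / (C + 1))"
  have r: "r > 0" unfolding r_def using dlim e C by simp
  show "\<forall>\<^sub>F x in at 0 within {0..}. dist ((F x - F 0) / (x - 0)) D < e"
    unfolding eventually_at
  proof (intro exI[of _ r] conjI r ballI impI)
    fix x :: real assume x: "x \<in> {0..}" "x \<noteq> 0 \<and> dist x 0 < r"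
    have x0: "0 < x" "x < dlim" "x < e / (C + 1)" using x unfolding r_def by auto
    have "C * x \<le> C * (e / (C + 1))" using x0 C by (intro mult_left_mono) auto
    also have "\<dots> < e" using C e by (simp add: field_simps)
    finally have "C * x < e" .
    thus "dist ((F x - F 0) / (x - 0)) D < e" using b[OF x0(1,2)] by (simp add: dist_real_def)
  qed
qed

locale pvK = pv +
  fixes K :: "'a \<times> 'a \<Rightarrow> real"
  assumes Kp: "\<forall>t\<in>V \<times> V. (\<Sum>s\<in>V \<times> V. K s * Am s t) = mm t / 2"
begin

definition "Phi X = (\<Sum>q\<in>V \<times> V. K q * eta q X)"
definition "zz d X = fpp d X - Mf X - d * Phi X"
definition "r0 X = (1 / n) * (\<Sum>u\<in>V. lam S u * st u * (aa X u * (1 - aa X u)))"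
definition "Phm = (\<Sum>Y\<in>Pow V. \<bar>Phi Y\<bar>)"
definition "Zm d = (\<Sum>Y\<in>Pow V. \<bar>zz d Y\<bar>)"

lemma Phi_step: "X \<subseteq> V \<Longrightarrow> Phi X - Pop 0 Phi X = r0 X"
proof -
  assume X: "X \<subseteq> V"
  have "Phi = (\<lambda>Y. \<Sum>q\<in>V \<times> V. K q * eta q Y)" by (rule ext) (simp add: Phi_def)
  hence "Phi X - Pop 0 Phi X = (1 / n) * (\<Sum>r\<in>V \<times> V. mm r * eta r X)"
    using Phi_eq[OF Kp X] by simp
  thus ?thesis unfolding r0_def r_ident[OF X] .
qed

lemma Phi_empty: "Phi {} = 0" unfolding Phi_def eta_def by simp
lemma Phi_V: "Phi V = 0" unfolding Phi_def eta_def by (intro sum.neutral) auto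

lemma zz_empty: "d \<ge> 0 \<Longrightarrow> zz d {} = 0"
  unfolding zz_def using fp_empty Phi_empty by (simp add: Mf_def)
lemma zz_V: "d \<ge> 0 \<Longrightarrow> zz d V = 0"
  unfolding zz_def using fp_V Phi_V Mf_V by simp

lemma absle: "Y \<in> Pow V \<Longrightarrow> \<bar>g Y\<bar> \<le> (\<Sum>Y\<in>Pow V. \<bar>g Y :: real\<bar>)"
  by (rule member_le_sum) (use finV in auto)

lemma Phm_nonneg: "Phm \<ge> 0" unfolding Phm_def by (simp add: sum_nonneg)
lemma Zm_nonneg: "Zm d \<ge> 0" unfolding Zm_def by (simp add: sum_nonneg)

lemma Mf_diff: "u \<in> V \<Longrightarrow> Y \<subseteq> V \<Longrightarrow> Mf (insert u Y) - Mf (Y - {u}) = st u"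
proof -
  assume u: "u \<in> V" and Y: "Y \<subseteq> V"
  have finY: "finite Y" using Y finV by (rule finite_subset)
  have eq: "insert u Y = insert u (Y - {u})" by auto
  have "Mf (insert u Y) = st u + Mf (Y - {u})" unfolding Mf_def eq using finY by (subst sum.insert) auto
  thus ?thesis by simp
qed

lemma s_bound: assumes d: "d \<ge> 0" and Y: "Y \<subseteq> V"
  shows "\<bar>\<Sum>Z\<in>Pow V. Cm Y Z * zz d Z\<bar> \<le> d\<^sup>2 * (1 + 2 * Phm) + 2 * d * Zm d"
proof (cases "Y = {} \<or> Y = V")
  case True
  have "\<bar>\<Sum>Z\<in>Pow V. Cm Y Z * zz d Z\<bar> = 0" using Cm_apply[OF Y] True zz_empty[OF d] zz_V[OF d] by auto
  also have "\<dots> \<le> d\<^sup>2 * (1 + 2 * Phm) + 2 * d * Zm d" using d Phm_nonneg Zm_nonneg by simp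
  finally show ?thesis .
next
  case False
  hence Y1: "Y \<noteq> {}" "Y \<noteq> V" by auto
  define h where "h = fpp d"
  have zf: "zz d = (\<lambda>X. (h X - Mf X) - d * Phi X)" by (rule ext) (simp add: zz_def h_def)
  have Pz: "Pop 0 (zz d) Y = Pop 0 h Y - Pop 0 Mf Y - d * Pop 0 Phi Y"
    unfolding zf Pop_diff Pop_scale ..
  have hY: "h Y = Pop d h Y" unfolding h_def by (rule fp_eq[OF Y Y1(2) d])
  have sY: "(\<Sum>Z\<in>Pow V. Cm Y Z * zz d Z) = (Pop d h Y - Pop 0 h Y) - d * r0 Y"
  proof -
    have "(\<Sum>Z\<in>Pow V. Cm Y Z * zz d Z) = zz d Y - Pop 0 (zz d) Y" using Cm_apply[OF Y] False by simp
    also have "\<dots> = (h Y - Pop 0 h Y) - (Mf Y - Pop 0 Mf Y) - d * (Phi Y - Pop 0 Phi Y)"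
      unfolding Pz zz_def h_def by (simp add: algebra_simps)
    also have "\<dots> = (Pop d h Y - Pop 0 h Y) - d * r0 Y"
      using hY Pop0_M[OF Y] Phi_step[OF Y] by simp
    finally show ?thesis .
  qed
  define dP where "dP u = Phi (insert u Y) - Phi (Y - {u})" for u
  define dZ where "dZ u = zz d (insert u Y) - zz d (Y - {u})" for u
  define T where "T u = st u * ((al d Y u - aa Y u) - d * lam S u * (aa Y u * (1 - aa Y u)))
       + (al d Y u - aa Y u) * (d * dP u + dZ u)" for u
  have hd: "h (insert u Y) - h (Y - {u}) = st u + d * dP u + dZ u" if u: "u \<in> V" for u
    using Mf_diff[OF u Y] unfolding dP_def dZ_def zz_def h_def by (simp add: algebra_simps)
  have sT: "(\<Sum>Z\<in>Pow V. Cm Y Z * zz d Z) = (1 / n) * (\<Sum>u\<in>V. T u)"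
  proof -
    have "(Pop d h Y - Pop 0 h Y) = (1 / n) * (\<Sum>u\<in>V. (al d Y u - aa Y u) * (st u + d * dP u + dZ u))"
      unfolding Pop_dd using hd by simp
    moreover have "d * r0 Y = (1 / n) * (\<Sum>u\<in>V. st u * (d * lam S u * (aa Y u * (1 - aa Y u))))"
      unfolding r0_def by (simp add: sum_distrib_left algebra_simps)
    ultimately have "(\<Sum>Z\<in>Pow V. Cm Y Z * zz d Z) = (1 / n) * ((\<Sum>u\<in>V. (al d Y u - aa Y u) * (st u + d * dP u + dZ u))
        - (\<Sum>u\<in>V. st u * (d * lam S u * (aa Y u * (1 - aa Y u)))))"
      unfolding sY by (simp add: right_diff_distrib)
    also have "\<dots> = (1 / n) * (\<Sum>u\<in>V. T u)"
      unfolding sum_subtractf[symmetric] T_def by (simp add: algebra_simps)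
    finally show ?thesis .
  qed
  define \<sigma> where "\<sigma> = d\<^sup>2 * (1 + 2 * Phm) + 2 * d * Zm d"
  have Tb: "\<bar>T u\<bar> \<le> \<sigma>" if u: "u \<in> V" for u
  proof -
    have i1: "insert u Y \<in> Pow V" "Y - {u} \<in> Pow V" using u Y by auto
    have dPb: "\<bar>dP u\<bar> \<le> 2 * Phm" unfolding dP_def Phm_def
      using absle[OF i1(1), of Phi] absle[OF i1(2), of Phi] by linarith
    have dZb: "\<bar>dZ u\<bar> \<le> 2 * Zm d" unfolding dZ_def Zm_def
      using absle[OF i1(1), of "zz d"] absle[OF i1(2), of "zz d"] by linarith
    have a1: "\<bar>al d Y u - aa Y u\<bar> \<le> d" by (rule al_diff(1)[OF u Y d])
    have a2: "\<bar>al d Y u - aa Y u - d * lam S u * (aa Y u * (1 - aa Y u))\<bar> \<le> d\<^sup>2" by (rule al_diff(2)[OF u Y d])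
    have s01: "0 \<le> st u" "st u \<le> 1" using st_nonneg st_le1[OF u] by auto
    have t1: "\<bar>st u * ((al d Y u - aa Y u) - d * lam S u * (aa Y u * (1 - aa Y u)))\<bar> \<le> d\<^sup>2"
    proof -
      have "\<bar>st u * ((al d Y u - aa Y u) - d * lam S u * (aa Y u * (1 - aa Y u)))\<bar>
          = st u * \<bar>(al d Y u - aa Y u) - d * lam S u * (aa Y u * (1 - aa Y u))\<bar>"
        using s01 by (simp add: abs_mult)
      also have "\<dots> \<le> 1 * d\<^sup>2" using s01 a2 by (intro mult_mono) auto
      finally show ?thesis by simp
    qed
    have "\<bar>d * dP u + dZ u\<bar> \<le> d * (2 * Phm) + 2 * Zm d"
    proof -
      have "\<bar>d * dP u\<bar> \<le> d * (2 * Phm)" using d dPb by (simp add: abs_mult mult_left_mono)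
      thus ?thesis using dZb by linarith
    qed
    hence t2: "\<bar>(al d Y u - aa Y u) * (d * dP u + dZ u)\<bar> \<le> d * (d * (2 * Phm) + 2 * Zm d)"
      unfolding abs_mult using a1 by (intro mult_mono) auto
    have "\<bar>T u\<bar> \<le> d\<^sup>2 + d * (d * (2 * Phm) + 2 * Zm d)" unfolding T_def using t1 t2 by linarith
    also have "\<dots> = \<sigma>" unfolding \<sigma>_def by (simp add: power2_eq_square algebra_simps)
    finally show ?thesis .
  qed
  have "\<bar>(1 / n) * (\<Sum>u\<in>V. T u)\<bar> \<le> (1 / n) * (\<Sum>u\<in>V. \<sigma>)"
  proof -
    have "\<bar>\<Sum>u\<in>V. T u\<bar> \<le> (\<Sum>u\<in>V. \<sigma>)" using Tb by (intro order_trans[OF sum_abs sum_mono]) auto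
    thus ?thesis using n_pos by (simp add: abs_mult divide_right_mono)
  qed
  also have "\<dots> = \<sigma>" by (rule sum_V_const)
  finally show ?thesis unfolding sT \<sigma>_def .
qed

end


context pvK begin

lemma Zm_rec: "\<exists>\<beta>\<ge>0. \<forall>d\<ge>0. Zm d \<le> \<beta> * (d\<^sup>2 * (1 + 2 * Phm) + 2 * d * Zm d)"
proof -
  obtain BC where BC: "\<forall>i\<in>Pow V. \<forall>k\<in>Pow V. (\<Sum>j\<in>Pow V. BC i j * Cm j k) = (if i = k then 1 else 0)"
    using Cm_inv by blast
  define \<beta> where "\<beta> = (\<Sum>X\<in>Pow V. \<Sum>Y\<in>Pow V. \<bar>BC X Y\<bar>)"
  have b0: "\<beta> \<ge> 0" unfolding \<beta>_def by (simp add: sum_nonneg)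
  show ?thesis
  proof (intro exI[of _ \<beta>] conjI b0 allI impI)
    fix d :: real assume d: "d \<ge> 0"
    define \<sigma> where "\<sigma> = d\<^sup>2 * (1 + 2 * Phm) + 2 * d * Zm d"
    define s where "s Y = (\<Sum>Z\<in>Pow V. Cm Y Z * zz d Z)" for Y
    have sb: "\<bar>s Y\<bar> \<le> \<sigma>" if "Y \<in> Pow V" for Y unfolding s_def \<sigma>_def using s_bound[OF d] that by auto
    have rep: "zz d X = (\<Sum>Y\<in>Pow V. BC X Y * s Y)" if X: "X \<in> Pow V" for X
    proof -
      have "(\<Sum>Y\<in>Pow V. BC X Y * s Y) = (\<Sum>Y\<in>Pow V. \<Sum>Z\<in>Pow V. BC X Y * Cm Y Z * zz d Z)"
        unfolding s_def by (simp add: sum_distrib_left mult.assoc)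
      also have "\<dots> = (\<Sum>Z\<in>Pow V. \<Sum>Y\<in>Pow V. BC X Y * Cm Y Z * zz d Z)" by (rule sum.swap)
      also have "\<dots> = (\<Sum>Z\<in>Pow V. (\<Sum>Y\<in>Pow V. BC X Y * Cm Y Z) * zz d Z)"
        by (simp add: sum_distrib_right)
      also have "\<dots> = (\<Sum>Z\<in>Pow V. (if X = Z then 1 else 0) * zz d Z)"
        by (intro sum.cong refl) (use BC X in auto)
      also have "\<dots> = zz d X" using X finV by (simp add: if_distrib[of "\<lambda>x. x * _"] sum.delta cong: if_cong)
      finally show ?thesis by simp
    qed
    have zb: "\<bar>zz d X\<bar> \<le> (\<Sum>Y\<in>Pow V. \<bar>BC X Y\<bar>) * \<sigma>" if X: "X \<in> Pow V" for X
    proof -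
      have "\<bar>zz d X\<bar> \<le> (\<Sum>Y\<in>Pow V. \<bar>BC X Y * s Y\<bar>)" unfolding rep[OF X] by (rule sum_abs)
      also have "\<dots> \<le> (\<Sum>Y\<in>Pow V. \<bar>BC X Y\<bar> * \<sigma>)"
        by (intro sum_mono) (use sb in \<open>auto simp: abs_mult intro: mult_left_mono\<close>)
      finally show ?thesis by (simp add: sum_distrib_right)
    qed
    have "Zm d \<le> (\<Sum>X\<in>Pow V. (\<Sum>Y\<in>Pow V. \<bar>BC X Y\<bar>) * \<sigma>)" unfolding Zm_def
      by (intro sum_mono zb) auto
    also have "\<dots> = \<beta> * \<sigma>" unfolding \<beta>_def by (simp add: sum_distrib_right)
    finally show "Zm d \<le> \<beta> * (d\<^sup>2 * (1 + 2 * Phm) + 2 * d * Zm d)" unfolding \<sigma>_def .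
  qed
qed

lemma Zm_small: "\<exists>\<beta>\<ge>0. \<forall>d. 0 \<le> d \<and> d \<le> 1 / (4 * \<beta> + 1) \<longrightarrow> Zm d \<le> 2 * \<beta> * d\<^sup>2 * (1 + 2 * Phm)"
proof -
  obtain \<beta> where b0: "\<beta> \<ge> 0" and rec: "\<forall>d\<ge>0. Zm d \<le> \<beta> * (d\<^sup>2 * (1 + 2 * Phm) + 2 * d * Zm d)"
    using Zm_rec by blast
  show ?thesis
  proof (intro exI[of _ \<beta>] conjI b0 allI impI)
    fix d :: real assume d: "0 \<le> d \<and> d \<le> 1 / (4 * \<beta> + 1)"
    have "d * (4 * \<beta> + 1) \<le> 1" using d b0 by (simp add: le_divide_eq)
    hence bd: "2 * \<beta> * d \<le> 1 / 2" using d b0 by (simp add: algebra_simps)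
    have "(2 * \<beta> * d) * Zm d \<le> (1 / 2) * Zm d" using bd Zm_nonneg by (rule mult_right_mono)
    moreover have "Zm d \<le> \<beta> * d\<^sup>2 * (1 + 2 * Phm) + (2 * \<beta> * d) * Zm d"
    proof -
      have "Zm d \<le> \<beta> * (d\<^sup>2 * (1 + 2 * Phm) + 2 * d * Zm d)" using rec d by blast
      thus ?thesis by (simp add: algebra_simps)
    qed
    ultimately show "Zm d \<le> 2 * \<beta> * d\<^sup>2 * (1 + 2 * Phm)" by linarith
  qed
qed

lemma fp_avg_deriv:
  "((\<lambda>d. fp_avg V E w S d) has_real_derivative ((1 / n) * (\<Sum>u\<in>V. Phi {u}))) (at 0 within {0..})"
proof -
  obtain \<beta> where b0: "\<beta> \<ge> 0" and sm: "\<forall>d. 0 \<le> d \<and> d \<le> 1 / (4 * \<beta> + 1) \<longrightarrow> Zm d \<le> 2 * \<beta> * d\<^sup>2 * (1 + 2 * Phm)"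
    using Zm_small by blast
  define D where "D = (1 / n) * (\<Sum>u\<in>V. Phi {u})"
  define F where "F d = fp_avg V E w S d" for d
  have Fd: "F d = (1 / n) * (\<Sum>u\<in>V. Mf {u} + d * Phi {u} + zz d {u})" for d
    unfolding F_def fp_avg_def n_def zz_def by simp
  have F0: "F 0 = (1 / n) * (\<Sum>u\<in>V. Mf {u})"
    unfolding F_def fp_avg_def n_def using fp0 by simp
  show ?thesis unfolding D_def[symmetric] F_def[symmetric]
  proof (rule deriv_from_bound[where C = "2 * \<beta> * (1 + 2 * Phm)" and dlim = "1 / (4 * \<beta> + 1)"])
    show "0 \<le> 2 * \<beta> * (1 + 2 * Phm)" using b0 Phm_nonneg by simp
    show "0 < 1 / (4 * \<beta> + 1)" using b0 by simp
    fix d :: real assume d: "0 < d" "d < 1 / (4 * \<beta> + 1)"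
    have "F d - F 0 = (1 / n) * (\<Sum>u\<in>V. Mf {u} + d * Phi {u} + zz d {u}) - (1 / n) * (\<Sum>u\<in>V. Mf {u})"
      using Fd[of d] F0 by simp
    also have "\<dots> = (1 / n) * (\<Sum>u\<in>V. d * Phi {u} + zz d {u})"
      by (simp add: sum.distrib ring_distribs)
    also have "\<dots> = d * D + (1 / n) * (\<Sum>u\<in>V. zz d {u})"
      unfolding D_def by (simp add: sum.distrib sum_distrib_left algebra_simps)
    finally have fd: "F d - F 0 = d * D + (1 / n) * (\<Sum>u\<in>V. zz d {u})" .
    define A where "A = (1 / n) * (\<Sum>u\<in>V. zz d {u})"
    have e1: "(F d - F 0) / d - D = A / d"
      using d unfolding fd A_def[symmetric] by (simp add: field_simps)
    have A1: "\<bar>A\<bar> \<le> Zm d"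
    proof -
      have "\<bar>\<Sum>u\<in>V. zz d {u}\<bar> \<le> (\<Sum>u\<in>V. Zm d)"
        by (intro order_trans[OF sum_abs sum_mono]) (use absle in \<open>auto simp: Zm_def\<close>)
      hence "\<bar>(1 / n) * (\<Sum>u\<in>V. zz d {u})\<bar> \<le> (1 / n) * (\<Sum>u\<in>V. Zm d)"
        using n_pos by (simp add: abs_mult divide_right_mono)
      thus ?thesis unfolding A_def by (simp only: sum_V_const)
    qed
    have "Zm d \<le> 2 * \<beta> * d\<^sup>2 * (1 + 2 * Phm)" using sm d by simp
    hence A2: "\<bar>A\<bar> \<le> 2 * \<beta> * d\<^sup>2 * (1 + 2 * Phm)" using A1 by linarith
    have "\<bar>(F d - F 0) / d - D\<bar> = \<bar>A\<bar> / d" unfolding e1 using d by (simp add: abs_divide)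
    also have "\<dots> \<le> (2 * \<beta> * d\<^sup>2 * (1 + 2 * Phm)) / d"
      using A2 d by (intro divide_right_mono) auto
    also have "\<dots> = 2 * \<beta> * (1 + 2 * Phm) * d" using d by (simp add: power2_eq_square)
    finally show "\<bar>(F d - F 0) / d - D\<bar> \<le> 2 * \<beta> * (1 + 2 * Phm) * d" .
  qed
qed

end



lemma sum_delta1: assumes "finite A" "q \<in> A"
  shows "(\<Sum>s\<in>A. (if q = s then 1 else 0) * g s) = (g q :: real)"
proof -
  have "(\<Sum>s\<in>A. (if q = s then 1 else 0) * g s) = (\<Sum>s\<in>A. if q = s then g s else 0)"
    by (rule sum.cong) auto
  thus ?thesis using assms by (simp add: sum.delta)
qed

lemma sum_delta2: assumes "finite A" "t \<in> A"
  shows "(\<Sum>r\<in>A. g r * (if r = t then 1 else 0)) = (g t :: real)"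
proof -
  have "(\<Sum>r\<in>A. g r * (if r = t then 1 else 0)) = (\<Sum>r\<in>A. if r = t then g r else 0)"
    by (rule sum.cong) auto
  thus ?thesis using assms by (simp add: sum.delta')
qed
context pv begin

definition "ee s = (if fst s = snd s then 0 else (1::real) / 2)"

lemma psi_Am: assumes ps: "psi_system V E w \<psi>" and q: "q \<in> V \<times> V"
  shows "(\<Sum>r\<in>V \<times> V. Am q r * \<psi> (fst r) (snd r)) = ee q"
proof -
  obtain i j where ij: "q = (i, j)" "i \<in> V" "j \<in> V" using q by auto
  have A: "(\<Sum>r\<in>V \<times> V. Am (i, j) r * \<psi> (fst r) (snd r)) =
    (if i = j then \<psi> i j else \<psi> i j - (\<Sum>l\<in>V. p i l * \<psi> l j + p j l * \<psi> i l) / 2)"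
    using Am_apply[OF ij(2,3), of "\<lambda>r. \<psi> (fst r) (snd r)"] by simp
  show ?thesis
  proof (cases "i = j")
    case True thus ?thesis using A ps ij unfolding psi_system_def ee_def by auto
  next
    case False
    have "\<psi> i j = (1 + (\<Sum>l\<in>V. p i l * \<psi> l j + p j l * \<psi> i l)) / 2"
      using ps ij False unfolding psi_system_def by blast
    thus ?thesis using A False ij unfolding ee_def by (simp add: field_simps)
  qed
qed

lemma psi_exists: "\<exists>\<psi>. psi_system V E w \<psi>"
proof -
  obtain BA where BA: "\<forall>i\<in>V \<times> V. \<forall>k\<in>V \<times> V. (\<Sum>j\<in>V \<times> V. Am i j * BA j k) = (if i = k then 1 else 0)"
    using Am_inv by blast
  define pf where "pf r = (\<Sum>s\<in>V \<times> V. BA r s * ee s)" for r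
  define \<psi> where "\<psi> i j = pf (i, j)" for i j
  have Ap: "(\<Sum>r\<in>V \<times> V. Am q r * pf r) = ee q" if q: "q \<in> V \<times> V" for q
  proof -
    have "(\<Sum>r\<in>V \<times> V. Am q r * pf r) = (\<Sum>r\<in>V \<times> V. \<Sum>s\<in>V \<times> V. Am q r * BA r s * ee s)"
      unfolding pf_def by (simp add: sum_distrib_left mult.assoc)
    also have "\<dots> = (\<Sum>s\<in>V \<times> V. \<Sum>r\<in>V \<times> V. Am q r * BA r s * ee s)" by (rule sum.swap)
    also have "\<dots> = (\<Sum>s\<in>V \<times> V. (\<Sum>r\<in>V \<times> V. Am q r * BA r s) * ee s)" by (simp add: sum_distrib_right)
    also have "\<dots> = (\<Sum>s\<in>V \<times> V. (if q = s then 1 else 0) * ee s)"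
    proof (rule sum.cong[OF refl])
      fix s assume s: "s \<in> V \<times> V"
      have "(\<Sum>r\<in>V \<times> V. Am q r * BA r s) = (if q = s then 1 else 0)" using BA q s by blast
      thus "(\<Sum>r\<in>V \<times> V. Am q r * BA r s) * ee s = (if q = s then 1 else 0) * ee s" by simp
    qed
    also have "\<dots> = ee q" using q finV by (intro sum_delta1) auto
    finally show ?thesis .
  qed
  have "psi_system V E w \<psi>"
    unfolding psi_system_def
  proof (intro conjI ballI impI)
    fix i assume i: "i \<in> V"
    have "(\<Sum>r\<in>V \<times> V. Am (i, i) r * pf r) = pf (i, i)" using Am_apply[OF i i, of pf] by simp
    thus "\<psi> i i = 0" using Ap[of "(i, i)"] i unfolding \<psi>_def ee_def by simp
  next
    fix i j assume ij: "i \<in> V" "j \<in> V" "i \<noteq> j"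
    have "pf (i, j) - (\<Sum>l\<in>V. p i l * pf (l, j) + p j l * pf (i, l)) / 2 = 1 / 2"
      using Am_apply[OF ij(1,2), of pf] Ap[of "(i, j)"] ij unfolding ee_def by simp
    thus "\<psi> i j = (1 + (\<Sum>l\<in>V. p i l * \<psi> l j + p j l * \<psi> i l)) / 2"
      unfolding \<psi>_def by (simp add: field_simps)
  qed
  thus ?thesis by blast
qed

lemma psi_unique: assumes "psi_system V E w \<psi>" "psi_system V E w \<psi>'" and ij: "i \<in> V" "j \<in> V"
  shows "\<psi> i j = \<psi>' i j"
proof -
  define f where "f r = \<psi> (fst r) (snd r) - \<psi>' (fst r) (snd r)" for r
  have "f (i, j) = 0"
  proof (rule pair_unique)
    show "(i, j) \<in> V \<times> V" using ij by simp
  next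
    fix i assume "i \<in> V" thus "f (i, i) = 0" using assms unfolding f_def psi_system_def by simp
  next
    fix i j assume ij: "i \<in> V" "j \<in> V" "i \<noteq> j"
    have e1: "\<psi> i j = (1 + (\<Sum>l\<in>V. p i l * \<psi> l j + p j l * \<psi> i l)) / 2"
      using assms(1) ij unfolding psi_system_def by blast
    have e2: "\<psi>' i j = (1 + (\<Sum>l\<in>V. p i l * \<psi>' l j + p j l * \<psi>' i l)) / 2"
      using assms(2) ij unfolding psi_system_def by blast
    have "(\<Sum>l\<in>V. p i l * f (l, j) + p j l * f (i, l))
       = (\<Sum>l\<in>V. p i l * \<psi> l j + p j l * \<psi> i l) - (\<Sum>l\<in>V. p i l * \<psi>' l j + p j l * \<psi>' i l)"
      unfolding f_def by (simp add: sum_subtractf[symmetric] algebra_simps)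
    thus "f (i, j) = (\<Sum>l\<in>V. p i l * f (l, j) + p j l * f (i, l)) / 2"
      unfolding f_def using e1 e2 by (simp add: field_simps)
  qed
  thus ?thesis unfolding f_def by simp
qed

lemma deriv_main: assumes ps: "psi_system V E w \<psi>"
  shows "((\<lambda>d. fp_avg V E w S d) has_real_derivative
             ((1 / real (card V)) *
               (\<Sum>i\<in>V. \<Sum>j\<in>V. fp V E w S 0 {i} * b2 V E w S i j * \<psi> i j)))
          (at 0 within {0..})"
proof -
  obtain BA where BA: "\<forall>i\<in>V \<times> V. \<forall>k\<in>V \<times> V. (\<Sum>j\<in>V \<times> V. BA i j * Am j k) = (if i = k then 1 else 0)"
    using Am_inv by blast
  define K where "K s = (\<Sum>r\<in>V \<times> V. (mm r / 2) * BA r s)" for s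
  have Kp: "\<forall>t\<in>V \<times> V. (\<Sum>s\<in>V \<times> V. K s * Am s t) = mm t / 2"
  proof
    fix t assume t: "t \<in> V \<times> V"
    have "(\<Sum>s\<in>V \<times> V. K s * Am s t) = (\<Sum>s\<in>V \<times> V. \<Sum>r\<in>V \<times> V. (mm r / 2) * (BA r s * Am s t))"
      unfolding K_def by (simp add: sum_distrib_right mult.assoc)
    also have "\<dots> = (\<Sum>r\<in>V \<times> V. \<Sum>s\<in>V \<times> V. (mm r / 2) * (BA r s * Am s t))" by (rule sum.swap)
    also have "\<dots> = (\<Sum>r\<in>V \<times> V. (mm r / 2) * (\<Sum>s\<in>V \<times> V. BA r s * Am s t))" by (simp add: sum_distrib_left)
    also have "\<dots> = (\<Sum>r\<in>V \<times> V. (mm r / 2) * (if r = t then 1 else 0))"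
    proof (rule sum.cong[OF refl])
      fix r assume r: "r \<in> V \<times> V"
      have "(\<Sum>s\<in>V \<times> V. BA r s * Am s t) = (if r = t then 1 else 0)" using BA r t by blast
      thus "(mm r / 2) * (\<Sum>s\<in>V \<times> V. BA r s * Am s t) = (mm r / 2) * (if r = t then 1 else 0)" by simp
    qed
    also have "\<dots> = mm t / 2" using t finV by (intro sum_delta2) auto
    finally show "(\<Sum>s\<in>V \<times> V. K s * Am s t) = mm t / 2" .
  qed
  interpret pvK V E w S K by unfold_locales (rule Kp)
  define pf where "pf r = \<psi> (fst r) (snd r)" for r
  have et: "(\<Sum>u\<in>V. eta q {u}) = 2 * ee q" if q: "q \<in> V \<times> V" for q
  proof -
    have "(\<Sum>u\<in>V. eta q {u}) = (\<Sum>u\<in>V. if u = fst q then (if snd q = fst q then 0 else 1) else 0)"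
      unfolding eta_def by (intro sum.cong refl) auto
    also have "\<dots> = (if snd q = fst q then 0 else 1)"
    proof -
      have "fst q \<in> V" using q by auto
      thus ?thesis using finV by (simp add: sum.delta')
    qed
    finally show ?thesis unfolding ee_def by auto
  qed
  have "(\<Sum>u\<in>V. Phi {u}) = (\<Sum>q\<in>V \<times> V. K q * (\<Sum>u\<in>V. eta q {u}))"
    unfolding Phi_def by (simp add: sum.swap[of _ V] sum_distrib_left)
  also have "\<dots> = 2 * (\<Sum>q\<in>V \<times> V. K q * ee q)"
  proof -
    have "(\<Sum>q\<in>V \<times> V. K q * (\<Sum>u\<in>V. eta q {u})) = (\<Sum>q\<in>V \<times> V. 2 * (K q * ee q))"
      by (rule sum.cong[OF refl]) (simp add: et)
    thus ?thesis by (simp add: sum_distrib_left)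
  qed
  also have "\<dots> = 2 * (\<Sum>q\<in>V \<times> V. K q * (\<Sum>r\<in>V \<times> V. Am q r * pf r))"
    using psi_Am[OF ps] unfolding pf_def by simp
  also have "\<dots> = 2 * (\<Sum>r\<in>V \<times> V. (\<Sum>q\<in>V \<times> V. K q * Am q r) * pf r)"
  proof -
    have "(\<Sum>q\<in>V \<times> V. K q * (\<Sum>r\<in>V \<times> V. Am q r * pf r)) = (\<Sum>q\<in>V \<times> V. \<Sum>r\<in>V \<times> V. K q * Am q r * pf r)"
      by (simp add: sum_distrib_left mult.assoc)
    also have "\<dots> = (\<Sum>r\<in>V \<times> V. \<Sum>q\<in>V \<times> V. K q * Am q r * pf r)" by (rule sum.swap)
    also have "\<dots> = (\<Sum>r\<in>V \<times> V. (\<Sum>q\<in>V \<times> V. K q * Am q r) * pf r)" by (simp add: sum_distrib_right)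
    finally show ?thesis by simp
  qed
  also have "\<dots> = (\<Sum>r\<in>V \<times> V. mm r * pf r)"
  proof -
    have "(\<Sum>r\<in>V \<times> V. (\<Sum>q\<in>V \<times> V. K q * Am q r) * pf r) = (\<Sum>r\<in>V \<times> V. (mm r / 2) * pf r)"
    proof (rule sum.cong[OF refl])
      fix r assume r: "r \<in> V \<times> V"
      have "(\<Sum>q\<in>V \<times> V. K q * Am q r) = mm r / 2" using Kp r by blast
      thus "(\<Sum>q\<in>V \<times> V. K q * Am q r) * pf r = mm r / 2 * pf r" by simp
    qed
    thus ?thesis by (simp add: sum_distrib_left)
  qed
  also have "\<dots> = (\<Sum>i\<in>V. \<Sum>j\<in>V. fp V E w S 0 {i} * b2 V E w S i j * \<psi> i j)"
    unfolding sum_VB pf_def mm_def by (intro sum.cong refl) (simp add: fp0 Mf_def)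
  finally have "(\<Sum>u\<in>V. Phi {u}) = (\<Sum>i\<in>V. \<Sum>j\<in>V. fp V E w S 0 {i} * b2 V E w S i j * \<psi> i j)" .
  thus ?thesis using fp_avg_deriv unfolding n_def by simp
qed

end



theorem mainTheorem10:
  fixes V :: "'a set" and E :: "('a \<times> 'a) set" and w :: "'a \<Rightarrow> 'a \<Rightarrow> real" and S :: "'a set"
  assumes finV: "finite V" and neV: "V \<noteq> {}"
    and E_sub: "E \<subseteq> V \<times> V"
    and w_pos: "\<forall>i j. (i, j) \<in> E \<longrightarrow> w i j > 0"
    and strong: "\<forall>i\<in>V. \<forall>j\<in>V. (i, j) \<in> E\<^sup>*"
    and E_sym: "\<forall>i j. (i, j) \<in> E \<longleftrightarrow> (j, i) \<in> E"
    and w_sym: "\<forall>i j. (i, j) \<in> E \<longrightarrow> w i j = w j i"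
    and S_sub: "S \<subseteq> V"
  shows "(\<exists>\<psi>. psi_system V E w \<psi>)
    \<and> (\<forall>\<psi> \<psi>'. psi_system V E w \<psi> \<and> psi_system V E w \<psi>' \<longrightarrow>
          (\<forall>i\<in>V. \<forall>j\<in>V. \<psi> i j = \<psi>' i j))
    \<and> (\<forall>\<psi>. psi_system V E w \<psi> \<longrightarrow>
          ((\<lambda>d. fp_avg V E w S d) has_real_derivative
             ((1 / real (card V)) *
               (\<Sum>i\<in>V. \<Sum>j\<in>V. fp V E w S 0 {i} * b2 V E w S i j * \<psi> i j)))
          (at 0 within {0..}))"
proof (cases "card V \<ge> 2")
  case True
  interpret pv V E w S
    using finV E_sub w_pos strong E_sym w_sym S_sub True by unfold_locales auto
  show ?thesis using psi_exists psi_unique deriv_main by blast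
next
  case False
  have "card V \<noteq> 0" using finV neV by simp
  hence "card V = 1" using False by simp
  then obtain a where Va: "V = {a}" by (rule card_1_singletonE)
  have hw1: "hit_within V E w S d T V = 1" for d T by (cases T) (simp_all add: hit_within.simps)
  have fp1: "fp V E w S d {a} = 1" for d
    unfolding fp_def Va[symmetric] hw1 by (rule limI) simp
  have c1: "card V = 1" by fact
  have su: "(\<Sum>u\<in>V. fp V E w S d {u}) = fp V E w S d {a}" for d
  proof -
    have "(\<Sum>u\<in>{a}. fp V E w S d {u}) = fp V E w S d {a}" by simp
    thus ?thesis using Va by simp
  qed
  have fa: "(\<lambda>d. fp_avg V E w S d) = (\<lambda>d. 1)"
  proof
    fix d show "fp_avg V E w S d = 1" unfolding fp_avg_def su fp1 c1 by simp
  qed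
  have diag: "\<psi> a a = 0" if "psi_system V E w \<psi>" for \<psi> using that Va unfolding psi_system_def by simp
  have ex: "\<exists>\<psi>. psi_system V E w \<psi>"
    by (rule exI[of _ "\<lambda>i j. 0"]) (simp add: psi_system_def Va)
  have un: "\<forall>\<psi> \<psi>'. psi_system V E w \<psi> \<and> psi_system V E w \<psi>' \<longrightarrow> (\<forall>i\<in>V. \<forall>j\<in>V. \<psi> i j = \<psi>' i j)"
  proof (intro allI impI ballI)
    fix \<psi> \<psi>' i j assume h: "psi_system V E w \<psi> \<and> psi_system V E w \<psi>'" and ij: "i \<in> V" "j \<in> V"
    have "i = a" "j = a" using ij Va by auto
    thus "\<psi> i j = \<psi>' i j" using diag[of \<psi>] diag[of \<psi>'] h by simp
  qed
  have de: "\<forall>\<psi>. psi_system V E w \<psi> \<longrightarrow>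
          ((\<lambda>d. fp_avg V E w S d) has_real_derivative
             ((1 / real (card V)) *
               (\<Sum>i\<in>V. \<Sum>j\<in>V. fp V E w S 0 {i} * b2 V E w S i j * \<psi> i j)))
          (at 0 within {0..})"
  proof (intro allI impI)
    fix \<psi> assume "psi_system V E w \<psi>"
    hence z: "(1 / real (card V)) * (\<Sum>i\<in>V. \<Sum>j\<in>V. fp V E w S 0 {i} * b2 V E w S i j * \<psi> i j) = 0"
      using diag Va by simp
    have "((\<lambda>d::real. 1::real) has_real_derivative 0) (at 0 within {0..})" by (rule DERIV_const)
    thus "((\<lambda>d. fp_avg V E w S d) has_real_derivative
             ((1 / real (card V)) *
               (\<Sum>i\<in>V. \<Sum>j\<in>V. fp V E w S 0 {i} * b2 V E w S i j * \<psi> i j)))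
          (at 0 within {0..})" unfolding fa z .
  qed
  show ?thesis using ex un de by blast
qed


end
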